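(* Let $S$ be a finite-dimensional quantum system, $H$ a Hermitian operator on $S$, $\beta>0$, $\Gamma=e^{-\beta H}/\operatorname{Tr}e^{-\beta H}$, and $\Phi$ a CPTP map on $S$ with trace-dual $\Phi^\dagger$. Let $\Delta_{\mathrm{drop}}:=\operatorname{Tr}[\Gamma H]-\operatorname{Tr}[\Phi(\Gamma)H]$ and $\gamma:=\Phi^\dagger(\Gamma)/\operatorname{Tr}[\Phi^\dagger(\Gamma)]$. Then $$\Delta_{\mathrm{drop}}\le-\beta^{-1}D(\Gamma\|\Phi^\dagger(\Gamma))=\beta^{-1}\{\ln\operatorname{Tr}[\Phi^\dagger(\Gamma)]-D(\Gamma\|\gamma)\}\le\beta^{-1}\ln\operatorname{Tr}[\Phi^\dagger(\Gamma)].$$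
   Context: The trace-dual $\Phi^\dagger$ satisfies $\operatorname{Tr}[\Phi(X)Y]=\operatorname{Tr}[X\Phi^\dagger(Y)]$ for all $X,Y$. For positive semidefinite $X\neq0$ and $Y$, $D(X\|Y):=\operatorname{Tr}[X]^{-1}\operatorname{Tr}[X\ln X-X\ln Y]$ if $\operatorname{supp}X\subseteq\operatorname{supp}Y$, and $+\infty$ otherwise. *)

theory Defs
  imports Complex_Main "Jordan_Normal_Form.Matrix" "HOL-Library.Extended_Real"
begin

definition mtr :: "complex mat \<Rightarrow> complex" where
  "mtr A = (\<Sum>i<dim_row A. A $$ (i, i))"

definition adj :: "complex mat \<Rightarrow> complex mat" where
  "adj A = mat (dim_col A) (dim_row A) (\<lambda>(i, j). cnj (A $$ (j, i)))"

definition cinner :: "complex vec \<Rightarrow> complex vec \<Rightarrow> complex" where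
  "cinner v w = (\<Sum>i<dim_vec v. cnj (v $ i) * w $ i)"

definition hermitian :: "nat \<Rightarrow> complex mat \<Rightarrow> bool" where
  "hermitian n A \<longleftrightarrow> A \<in> carrier_mat n n \<and> adj A = A"

definition unitary :: "nat \<Rightarrow> complex mat \<Rightarrow> bool" where
  "unitary n U \<longleftrightarrow> U \<in> carrier_mat n n \<and> U * adj U = 1\<^sub>m n \<and> adj U * U = 1\<^sub>m n"

definition psd :: "nat \<Rightarrow> complex mat \<Rightarrow> bool" where
  "psd n A \<longleftrightarrow> hermitian n A \<and> (\<forall>v \<in> carrier_vec n. 0 \<le> Re (cinner v (A *\<^sub>v v)))"

definition rdiag :: "real list \<Rightarrow> complex mat" where
  "rdiag ls = mat (length ls) (length ls) (\<lambda>(i, j). if i = j then complex_of_real (ls ! i) else 0)"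

text \<open>Functional calculus for Hermitian matrices via a spectral decomposition
  A = U diag(lambda) U^*; f(A) = U diag(f lambda) U^* (independent of the choice).\<close>
definition mat_fun :: "(real \<Rightarrow> real) \<Rightarrow> complex mat \<Rightarrow> complex mat" where
  "mat_fun f A = (SOME B. \<exists>U ls. unitary (dim_row A) U \<and> length ls = dim_row A \<and>
      A = U * rdiag ls * adj U \<and> B = U * rdiag (map f ls) * adj U)"

text \<open>Matrix logarithm of a PSD matrix, taken on its support (eigenvalue 0 mapped to 0);
  with supp X \<subseteq> supp Y this gives the usual values of Tr[X ln X] and Tr[X ln Y].\<close>
definition mat_ln :: "complex mat \<Rightarrow> complex mat" where
  "mat_ln A = mat_fun (\<lambda>x. if 0 < x then ln x else 0) A"

definition supp :: "complex mat \<Rightarrow> complex vec set" where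
  "supp A = {A *\<^sub>v v | v. v \<in> carrier_vec (dim_col A)}"

definition rel_ent :: "complex mat \<Rightarrow> complex mat \<Rightarrow> ereal" where
  "rel_ent X Y = (if supp X \<subseteq> supp Y
     then ereal (Re (mtr (X * mat_ln X - X * mat_ln Y) / mtr X)) else \<infinity>)"

definition linear_map :: "nat \<Rightarrow> (complex mat \<Rightarrow> complex mat) \<Rightarrow> bool" where
  "linear_map n \<Phi> \<longleftrightarrow> (\<forall>X \<in> carrier_mat n n. \<Phi> X \<in> carrier_mat n n) \<and>
     (\<forall>X \<in> carrier_mat n n. \<forall>Y \<in> carrier_mat n n. \<Phi> (X + Y) = \<Phi> X + \<Phi> Y) \<and>
     (\<forall>X \<in> carrier_mat n n. \<forall>c. \<Phi> (c \<cdot>\<^sub>m X) = c \<cdot>\<^sub>m \<Phi> X)"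

text \<open>(id_k \<otimes> \<Phi>) acting on a kn x kn matrix viewed as a k x k block matrix of n x n blocks.\<close>
definition ampliate :: "nat \<Rightarrow> nat \<Rightarrow> (complex mat \<Rightarrow> complex mat) \<Rightarrow> complex mat \<Rightarrow> complex mat" where
  "ampliate k n \<Phi> M = mat (k * n) (k * n) (\<lambda>(i, j).
     \<Phi> (mat n n (\<lambda>(a, b). M $$ ((i div n) * n + a, (j div n) * n + b))) $$ (i mod n, j mod n))"

definition completely_positive :: "nat \<Rightarrow> (complex mat \<Rightarrow> complex mat) \<Rightarrow> bool" where
  "completely_positive n \<Phi> \<longleftrightarrow>
     (\<forall>k \<ge> 1. \<forall>M. psd (k * n) M \<longrightarrow> psd (k * n) (ampliate k n \<Phi> M))"

definition trace_preserving :: "nat \<Rightarrow> (complex mat \<Rightarrow> complex mat) \<Rightarrow> bool" where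
  "trace_preserving n \<Phi> \<longleftrightarrow> (\<forall>X \<in> carrier_mat n n. mtr (\<Phi> X) = mtr X)"

definition cptp :: "nat \<Rightarrow> (complex mat \<Rightarrow> complex mat) \<Rightarrow> bool" where
  "cptp n \<Phi> \<longleftrightarrow> linear_map n \<Phi> \<and> completely_positive n \<Phi> \<and> trace_preserving n \<Phi>"

definition trace_dual :: "nat \<Rightarrow> (complex mat \<Rightarrow> complex mat) \<Rightarrow> (complex mat \<Rightarrow> complex mat) \<Rightarrow> bool" where
  "trace_dual n \<Phi> \<Psi> \<longleftrightarrow> (\<forall>Y \<in> carrier_mat n n. \<Psi> Y \<in> carrier_mat n n) \<and>
     (\<forall>X \<in> carrier_mat n n. \<forall>Y \<in> carrier_mat n n. mtr (\<Phi> X * Y) = mtr (X * \<Psi> Y))"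

end

theory Submission
  imports Defs "Jordan_Normal_Form.Spectral_Radius"
begin

lemmas ent = scalar_prod_def row_def col_def atLeast0LessThan

lemma mult_entry: "i < dim_row A \<Longrightarrow> j < dim_col B \<Longrightarrow> dim_col A = dim_row B \<Longrightarrow>
  (A * B) $$ (i,j) = (\<Sum>k<dim_col A. A $$ (i,k) * B $$ (k,j))"
  by (simp add: scalar_prod_def lessThan_atLeast0 row_def col_def)

lemma mult_vec_entry: "i < dim_row A \<Longrightarrow> dim_col A = dim_vec v \<Longrightarrow>
  (A *\<^sub>v v) $ i = (\<Sum>k<dim_col A. A $$ (i,k) * v $ k)"
  by (simp add: scalar_prod_def lessThan_atLeast0 row_def)

lemma adj_dims[simp]: "dim_row (adj A) = dim_col A" "dim_col (adj A) = dim_row A"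
  by (auto simp: adj_def)

lemma adj_entry[simp]: "i < dim_col A \<Longrightarrow> j < dim_row A \<Longrightarrow> adj A $$ (i,j) = cnj (A $$ (j,i))"
  by (auto simp: adj_def)

lemma adj_carrier[simp]: "A \<in> carrier_mat n m \<Longrightarrow> adj A \<in> carrier_mat m n"
  unfolding carrier_mat_def by simp

lemma adj_adj[simp]: "adj (adj A) = A"
  by (rule eq_matI, auto)

lemma adj_mult: assumes "A \<in> carrier_mat n k" "B \<in> carrier_mat k m"
  shows "adj (A * B) = adj B * adj A"
proof (rule eq_matI)
  fix i j assume ij: "i < dim_row (adj B * adj A)" "j < dim_col (adj B * adj A)"
  have "adj (A * B) $$ (i, j) = cnj (\<Sum>l<k. A $$ (j,l) * B $$ (l,i))"
    using assms ij by (simp add: ent)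
  also have "\<dots> = (\<Sum>l<k. cnj (B $$ (l,i)) * cnj (A $$ (j,l)))"
    by (simp add: mult.commute)
  also have "\<dots> = (adj B * adj A) $$ (i,j)"
    using assms ij by (simp add: ent)
  finally show "adj (A * B) $$ (i, j) = (adj B * adj A) $$ (i,j)" .
qed (insert assms, auto)

lemma adj_one[simp]: "adj (1\<^sub>m n) = 1\<^sub>m n"
  by (rule eq_matI, auto)

lemma adj_smult: "adj (c \<cdot>\<^sub>m A) = cnj c \<cdot>\<^sub>m adj A"
  by (rule eq_matI, auto)

lemma adj_add: "A \<in> carrier_mat n m \<Longrightarrow> B \<in> carrier_mat n m \<Longrightarrow> adj (A + B) = adj A + adj B"
  by (rule eq_matI, auto)

lemma rdiag_carrier[simp]: "rdiag ls \<in> carrier_mat (length ls) (length ls)"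
  by (simp add: rdiag_def)

lemma rdiag_dims[simp]: "dim_row (rdiag ls) = length ls" "dim_col (rdiag ls) = length ls"
  by (simp_all add: rdiag_def)

lemma adj_rdiag[simp]: "adj (rdiag ls) = rdiag ls"
  by (rule eq_matI, auto simp: rdiag_def)

lemma mtr_comm: assumes "A \<in> carrier_mat n m" "B \<in> carrier_mat m n"
  shows "mtr (A * B) = mtr (B * A)"
proof -
  have "mtr (A * B) = (\<Sum>i<n. \<Sum>k<m. A $$ (i,k) * B $$ (k,i))"
    using assms by (simp add: mtr_def ent)
  also have "\<dots> = (\<Sum>k<m. \<Sum>i<n. B $$ (k,i) * A $$ (i,k))"
    by (subst sum.swap) (simp add: mult.commute)
  also have "\<dots> = mtr (B * A)"
    using assms by (simp add: mtr_def ent)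
  finally show ?thesis .
qed

lemma mtr_add: "A \<in> carrier_mat n n \<Longrightarrow> B \<in> carrier_mat n n \<Longrightarrow> mtr (A + B) = mtr A + mtr B"
  by (simp add: mtr_def sum.distrib)

lemma mtr_smult: "A \<in> carrier_mat n n \<Longrightarrow> mtr (c \<cdot>\<^sub>m A) = c * mtr A"
  unfolding mtr_def sum_distrib_left by (intro sum.cong) auto

lemma mtr_adj: "A \<in> carrier_mat n n \<Longrightarrow> mtr (adj A) = cnj (mtr A)"
  by (simp add: mtr_def)

lemma cinner_adj: assumes "A \<in> carrier_mat n m" "u \<in> carrier_vec n" "w \<in> carrier_vec m"
  shows "cinner u (A *\<^sub>v w) = cinner (adj A *\<^sub>v u) w"
proof -
  have "cinner u (A *\<^sub>v w) = (\<Sum>i<n. \<Sum>k<m. cnj (u $ i) * (A $$ (i,k) * w $ k))"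
    using assms by (simp add: cinner_def ent sum_distrib_left)
  also have "\<dots> = (\<Sum>k<m. \<Sum>i<n. cnj (cnj (A $$ (i,k)) * u $ i) * w $ k)"
    by (subst sum.swap) (simp add: mult.commute mult.left_commute)
  also have "\<dots> = cinner (adj A *\<^sub>v u) w"
    using assms by (simp add: cinner_def ent sum_distrib_right)
  finally show ?thesis .
qed

lemma cinner_cnj: "dim_vec u = dim_vec w \<Longrightarrow> cnj (cinner u w) = cinner w u"
  by (simp add: cinner_def mult.commute)

lemma sum_swap3: "(\<Sum>i\<in>A. \<Sum>j\<in>B. \<Sum>a\<in>C. f i j a) = (\<Sum>a\<in>C. \<Sum>i\<in>A. \<Sum>j\<in>B. f i j a)"
proof -
  have "(\<Sum>i\<in>A. \<Sum>j\<in>B. \<Sum>a\<in>C. f i j a) = (\<Sum>i\<in>A. \<Sum>a\<in>C. \<Sum>j\<in>B. f i j a)"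
    by (intro sum.cong refl) (rule sum.swap)
  also have "\<dots> = (\<Sum>a\<in>C. \<Sum>i\<in>A. \<Sum>j\<in>B. f i j a)" by (rule sum.swap)
  finally show ?thesis .
qed

definition udiag :: "complex mat \<Rightarrow> real list \<Rightarrow> complex mat" where
  "udiag U ls = U * rdiag ls * adj U"

lemma rdiag_entry[simp]: "i < length ls \<Longrightarrow> j < length ls \<Longrightarrow>
  rdiag ls $$ (i,j) = (if i = j then complex_of_real (ls ! i) else 0)"
  by (simp add: rdiag_def)

lemma udiag_carrier[simp]: "U \<in> carrier_mat n n \<Longrightarrow> length ls = n \<Longrightarrow> udiag U ls \<in> carrier_mat n n"
  unfolding udiag_def by (metis adj_carrier mult_carrier_mat rdiag_carrier)

lemma udiag_dims[simp]: "dim_row (udiag U ls) = dim_row U" "dim_col (udiag U ls) = dim_row U"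
  unfolding udiag_def by auto

lemma udiag_entry: assumes U: "U \<in> carrier_mat n n" and l: "length ls = n" and ij: "i < n" "j < n"
  shows "udiag U ls $$ (i,j) = (\<Sum>a<n. U $$ (i,a) * complex_of_real (ls ! a) * cnj (U $$ (j,a)))"
proof -
  have "udiag U ls $$ (i,j) = (\<Sum>k<n. (U * rdiag ls) $$ (i,k) * cnj (U $$ (j,k)))"
    unfolding udiag_def using U l ij by (subst mult_entry) auto
  also have "\<dots> = (\<Sum>k<n. (\<Sum>a<n. U $$ (i,a) * rdiag ls $$ (a,k)) * cnj (U $$ (j,k)))"
    using U l ij by (intro sum.cong refl, subst mult_entry) auto
  also have "\<dots> = (\<Sum>k<n. U $$ (i,k) * complex_of_real (ls ! k) * cnj (U $$ (j,k)))"
  proof (intro sum.cong refl)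
    fix k assume k: "k \<in> {..<n}"
    have "(\<Sum>a<n. U $$ (i,a) * rdiag ls $$ (a,k)) = (\<Sum>a<n. if a = k then U $$ (i,k) * complex_of_real (ls ! k) else 0)"
      using k l by (intro sum.cong refl) auto
    also have "\<dots> = U $$ (i,k) * complex_of_real (ls ! k)" using k by (simp add: sum.delta)
    finally show "(\<Sum>a<n. U $$ (i,a) * rdiag ls $$ (a,k)) * cnj (U $$ (j,k)) = U $$ (i,k) * complex_of_real (ls ! k) * cnj (U $$ (j,k))"
      by simp
  qed
  finally show ?thesis .
qed

lemma unitaryD: assumes "unitary n U"
  shows "U \<in> carrier_mat n n" "U * adj U = 1\<^sub>m n" "adj U * U = 1\<^sub>m n"
  using assms by (auto simp: unitary_def)

lemma unitary_col_orth: assumes "unitary n U" "a < n" "b < n"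
  shows "cinner (col U a) (col U b) = (if a = b then 1 else 0)"
proof -
  have U: "U \<in> carrier_mat n n" using unitaryD[OF assms(1)] by auto
  have "(adj U * U) $$ (a,b) = (if a = b then 1 else 0)"
    using unitaryD(3)[OF assms(1)] assms by simp
  moreover have "(adj U * U) $$ (a,b) = cinner (col U a) (col U b)"
    using U assms by (simp add: ent cinner_def)
  ultimately show ?thesis by simp
qed

lemma unitary_row_orth: assumes "unitary n U" "i < n" "j < n"
  shows "(\<Sum>a<n. U $$ (i,a) * cnj (U $$ (j,a))) = (if i = j then 1 else 0)"
proof -
  have U: "U \<in> carrier_mat n n" using unitaryD[OF assms(1)] by auto
  have "(U * adj U) $$ (i,j) = (if i = j then 1 else 0)"
    using unitaryD(2)[OF assms(1)] assms by simp
  moreover have "(U * adj U) $$ (i,j) = (\<Sum>a<n. U $$ (i,a) * cnj (U $$ (j,a)))"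
    using U assms by (simp add: ent)
  ultimately show ?thesis by simp
qed

lemma mtr_udiag: assumes U: "U \<in> carrier_mat n n" and l: "length ls = n" and M: "M \<in> carrier_mat n n"
  shows "mtr (M * udiag U ls) = (\<Sum>a<n. complex_of_real (ls ! a) * cinner (col U a) (M *\<^sub>v col U a))"
proof -
  have "mtr (M * udiag U ls) = (\<Sum>i<n. \<Sum>j<n. M $$ (i,j) * udiag U ls $$ (j,i))"
    using U l M by (simp add: mtr_def ent)
  also have "\<dots> = (\<Sum>i<n. \<Sum>j<n. \<Sum>a<n. M $$ (i,j) * (U $$ (j,a) * complex_of_real (ls ! a) * cnj (U $$ (i,a))))"
    using U l by (simp add: udiag_entry sum_distrib_left)
  also have "\<dots> = (\<Sum>a<n. \<Sum>i<n. \<Sum>j<n. M $$ (i,j) * (U $$ (j,a) * complex_of_real (ls ! a) * cnj (U $$ (i,a))))"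
    by (rule sum_swap3)
  also have "\<dots> = (\<Sum>a<n. complex_of_real (ls ! a) * (\<Sum>i<n. cnj (U $$ (i,a)) * (\<Sum>j<n. M $$ (i,j) * U $$ (j,a))))"
    by (simp add: sum_distrib_left mult_ac)
  also have "\<dots> = (\<Sum>a<n. complex_of_real (ls ! a) * cinner (col U a) (M *\<^sub>v col U a))"
    using U M by (intro sum.cong refl) (simp add: cinner_def ent)
  finally show ?thesis .
qed

lemma cinner_udiag: assumes U: "U \<in> carrier_mat n n" and l: "length ls = n" and v: "v \<in> carrier_vec n"
  shows "cinner v (udiag U ls *\<^sub>v v) = (\<Sum>a<n. complex_of_real (ls ! a) * (cnj (cinner (col U a) v) * cinner (col U a) v))"
proof -
  have "cinner v (udiag U ls *\<^sub>v v) = (\<Sum>i<n. \<Sum>j<n. cnj (v $ i) * (udiag U ls $$ (i,j) * v $ j))"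
    using U l v by (simp add: cinner_def ent sum_distrib_left)
  also have "\<dots> = (\<Sum>i<n. \<Sum>j<n. \<Sum>a<n. cnj (v $ i) * (U $$ (i,a) * complex_of_real (ls ! a) * cnj (U $$ (j,a)) * v $ j))"
    using U l by (simp add: udiag_entry sum_distrib_left sum_distrib_right)
  also have "\<dots> = (\<Sum>a<n. \<Sum>i<n. \<Sum>j<n. cnj (v $ i) * (U $$ (i,a) * complex_of_real (ls ! a) * cnj (U $$ (j,a)) * v $ j))"
    by (rule sum_swap3)
  also have "\<dots> = (\<Sum>a<n. complex_of_real (ls ! a) * ((\<Sum>i<n. U $$ (i,a) * cnj (v $ i)) * (\<Sum>j<n. cnj (U $$ (j,a)) * v $ j)))"
    by (simp add: sum_distrib_left sum_distrib_right mult_ac)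
  also have "\<dots> = (\<Sum>a<n. complex_of_real (ls ! a) * (cnj (cinner (col U a) v) * cinner (col U a) v))"
    using U v by (simp add: cinner_def)
  finally show ?thesis .
qed

lemma mult_sq: "(A::complex mat) \<in> carrier_mat n n \<Longrightarrow> B \<in> carrier_mat n n \<Longrightarrow> A * B \<in> carrier_mat n n"
  by simp

lemma one_sq1: "(A::complex mat) \<in> carrier_mat n n \<Longrightarrow> 1\<^sub>m n * A = A" by (metis left_mult_one_mat)
lemma one_sq2: "(A::complex mat) \<in> carrier_mat n n \<Longrightarrow> A * 1\<^sub>m n = A" by (metis right_mult_one_mat)
lemmas one_sq = one_sq1 one_sq2


lemma rdiag_mult: assumes "length a = length b"
  shows "rdiag a * rdiag b = rdiag (map2 (*) a b)"
proof (rule eq_matI)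
  fix i j assume ij: "i < dim_row (rdiag (map2 (*) a b))" "j < dim_col (rdiag (map2 (*) a b))"
  have "(rdiag a * rdiag b) $$ (i,j) = (\<Sum>k<length a. rdiag a $$ (i,k) * rdiag b $$ (k,j))"
    using ij assms by (simp add: ent)
  also have "\<dots> = (\<Sum>k<length a. if k = i then (if i = j then complex_of_real (a ! i * b ! i) else 0) else 0)"
    using ij assms by (intro sum.cong refl) auto
  also have "\<dots> = rdiag (map2 (*) a b) $$ (i,j)" using ij assms by (simp add: sum.delta)
  finally show "(rdiag a * rdiag b) $$ (i,j) = rdiag (map2 (*) a b) $$ (i,j)" .
qed (insert assms, auto)

lemma udiag_mult: assumes U: "unitary n U" and l: "length a = n" "length b = n"
  shows "udiag U a * udiag U b = udiag U (map2 (*) a b)"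
proof -
  have Uc: "U \<in> carrier_mat n n" and UU: "adj U * U = 1\<^sub>m n" using unitaryD[OF U] by auto
  have a: "rdiag a \<in> carrier_mat n n" "rdiag b \<in> carrier_mat n n" using l by (metis rdiag_carrier)+
  have aU: "adj U \<in> carrier_mat n n" using Uc by simp
  have "udiag U a * udiag U b = U * rdiag a * (adj U * U) * rdiag b * adj U"
    unfolding udiag_def using Uc a aU by (simp add: assoc_mult_mat[of _ n n _ n _ n] mult_sq one_sq)
  also have "\<dots> = U * (rdiag a * rdiag b) * adj U"
    unfolding UU using Uc a aU by (simp add: assoc_mult_mat[of _ n n _ n _ n] mult_sq one_sq)
  finally show ?thesis unfolding udiag_def rdiag_mult[OF l(1)[folded l(2)]] .
qed

lemma udiag_mult_map: assumes U: "unitary n U" and l: "length ls = n"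
  shows "udiag U (map f ls) * udiag U (map g ls) = udiag U (map (\<lambda>x. f x * g x) ls)"
proof -
  have "map2 (*) (map f ls) (map g ls) = map (\<lambda>x. f x * g x) ls"
    by (induct ls) auto
  thus ?thesis using udiag_mult[OF U] l by auto
qed

lemma adj_udiag: assumes U: "U \<in> carrier_mat n n" and l: "length ls = n"
  shows "adj (udiag U ls) = udiag U ls"
proof -
  have a: "rdiag ls \<in> carrier_mat n n" using l by (metis rdiag_carrier)
  have "adj (udiag U ls) = adj (adj U) * adj (U * rdiag ls)"
    unfolding udiag_def using U a by (subst adj_mult[of _ n n]) auto
  also have "\<dots> = U * (rdiag ls * adj U)"
    using U a by (subst adj_mult[of _ n n]) auto
  finally show ?thesis unfolding udiag_def using U a by (simp add: assoc_mult_mat[of _ n n _ n _ n] mult_sq one_sq)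
qed

lemma hermitian_udiag: "U \<in> carrier_mat n n \<Longrightarrow> length ls = n \<Longrightarrow> hermitian n (udiag U ls)"
  unfolding hermitian_def using adj_udiag udiag_carrier by blast

lemma rdiag_smult: "complex_of_real c \<cdot>\<^sub>m rdiag ls = rdiag (map (\<lambda>x. c * x) ls)"
  by (rule eq_matI) (auto simp: rdiag_def)

lemma udiag_smult: assumes U: "U \<in> carrier_mat n n" and l: "length ls = n"
  shows "complex_of_real c \<cdot>\<^sub>m udiag U ls = udiag U (map (\<lambda>x. c * x) ls)"
proof -
  have a: "rdiag ls \<in> carrier_mat n n" using l by (metis rdiag_carrier)
  show ?thesis unfolding udiag_def rdiag_smult[symmetric]
    using U a by (simp add: mult_smult_distrib mult_smult_assoc_mat[of _ n n _ n])
qed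

lemma rdiag_ones: "rdiag (replicate n 1) = 1\<^sub>m n"
  by (rule eq_matI) (auto simp: rdiag_def)

lemma udiag_ones: assumes U: "unitary n U" shows "udiag U (replicate n 1) = 1\<^sub>m n"
  using unitaryD[OF U] unfolding udiag_def rdiag_ones by simp

lemma cinner_udiag_col: assumes U: "unitary n U" and l: "length ls = n" and b: "b < n"
  shows "cinner (col U b) (udiag U ls *\<^sub>v col U b) = complex_of_real (ls ! b)"
proof -
  have Uc: "U \<in> carrier_mat n n" using unitaryD[OF U] by auto
  have "cinner (col U b) (udiag U ls *\<^sub>v col U b) = (\<Sum>a<n. complex_of_real (ls ! a) * (cnj (cinner (col U a) (col U b)) * cinner (col U a) (col U b)))"
    using Uc l b by (intro cinner_udiag) auto
  also have "\<dots> = (\<Sum>a<n. if a = b then complex_of_real (ls ! b) else 0)"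
    using U b by (intro sum.cong refl) (auto simp: unitary_col_orth)
  finally show ?thesis using b by (simp add: sum.delta)
qed

lemma mtr_udiag1: assumes U: "unitary n U" and l: "length ls = n"
  shows "mtr (udiag U ls) = complex_of_real (sum_list ls)"
proof -
  have Uc: "U \<in> carrier_mat n n" using unitaryD[OF U] by auto
  have "mtr (udiag U ls) = mtr (1\<^sub>m n * udiag U ls)" using Uc l by simp
  also have "\<dots> = (\<Sum>a<n. complex_of_real (ls ! a) * cinner (col U a) (1\<^sub>m n *\<^sub>v col U a))"
    using Uc l by (intro mtr_udiag) auto
  also have "\<dots> = (\<Sum>a<n. complex_of_real (ls ! a))"
    using U Uc by (intro sum.cong refl) (simp add: unitary_col_orth)
  also have "\<dots> = complex_of_real (sum_list ls)"
    using l by (simp add: sum_list_sum_nth atLeast0LessThan)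
  finally show ?thesis .
qed

lemma udiag_fun_eq: assumes U: "unitary n U" and V: "unitary n V" and l: "length l = n" and m: "length m = n"
  and eq: "udiag U l = udiag V m"
  shows "udiag U (map f l) = udiag V (map f m)"
proof -
  have Uc: "U \<in> carrier_mat n n" and UU: "adj U * U = 1\<^sub>m n" "U * adj U = 1\<^sub>m n" using unitaryD[OF U] by auto
  have Vc: "V \<in> carrier_mat n n" and VV: "adj V * V = 1\<^sub>m n" "V * adj V = 1\<^sub>m n" using unitaryD[OF V] by auto
  have aU: "adj U \<in> carrier_mat n n" and aV: "adj V \<in> carrier_mat n n" using Uc Vc by auto
  have dl: "rdiag l \<in> carrier_mat n n" "rdiag (map f l) \<in> carrier_mat n n" using l by (metis rdiag_carrier length_map)+
  have dm: "rdiag m \<in> carrier_mat n n" "rdiag (map f m) \<in> carrier_mat n n" using m by (metis rdiag_carrier length_map)+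
  note assoc = assoc_mult_mat[of _ n n _ n _ n]
  define W where "W = adj V * U"
  have W: "W \<in> carrier_mat n n" unfolding W_def using aV Uc by simp
  have "adj V * udiag U l * U = W * rdiag l"
  proof -
    have "adj V * udiag U l * U = adj V * U * rdiag l * (adj U * U)"
      unfolding udiag_def using Uc aU aV dl by (simp add: assoc mult_sq one_sq)
    thus ?thesis unfolding UU W_def using Uc aV dl by (simp add: assoc mult_sq one_sq)
  qed
  moreover have "adj V * udiag V m * U = rdiag m * W"
  proof -
    have "adj V * udiag V m * U = (adj V * V) * rdiag m * (adj V * U)"
      unfolding udiag_def using Vc aV Uc dm by (simp add: assoc mult_sq one_sq)
    thus ?thesis unfolding VV W_def using dm by (simp add: one_sq)
  qed
  ultimately have comm: "W * rdiag l = rdiag m * W" using eq by simp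
  have commf: "W * rdiag (map f l) = rdiag (map f m) * W"
  proof (rule eq_matI)
    fix i j assume "i < dim_row (rdiag (map f m) * W)" "j < dim_col (rdiag (map f m) * W)"
    hence ij: "i < n" "j < n" using W m by auto
    have e1: "\<And>ls. length ls = n \<Longrightarrow> (W * rdiag ls) $$ (i,j) = W $$ (i,j) * complex_of_real (ls ! j)"
    proof -
      fix ls :: "real list" assume ls: "length ls = n"
      have "(W * rdiag ls) $$ (i,j) = (\<Sum>k<n. W $$ (i,k) * rdiag ls $$ (k,j))"
        using W ls ij by (simp add: ent)
      also have "\<dots> = (\<Sum>k<n. if k = j then W $$ (i,j) * complex_of_real (ls ! j) else 0)"
        using ls ij by (intro sum.cong refl) auto
      finally have "(W * rdiag ls) $$ (i,j) = (\<Sum>k<n. if k = j then W $$ (i,j) * complex_of_real (ls ! j) else 0)" .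
      thus "(W * rdiag ls) $$ (i,j) = W $$ (i,j) * complex_of_real (ls ! j)" using ij by (simp add: sum.delta)
    qed
    have e2: "\<And>ls. length ls = n \<Longrightarrow> (rdiag ls * W) $$ (i,j) = complex_of_real (ls ! i) * W $$ (i,j)"
    proof -
      fix ls :: "real list" assume ls: "length ls = n"
      have "(rdiag ls * W) $$ (i,j) = (\<Sum>k<n. rdiag ls $$ (i,k) * W $$ (k,j))"
        using W ls ij by (simp add: ent)
      also have "\<dots> = (\<Sum>k<n. if k = i then complex_of_real (ls ! i) * W $$ (i,j) else 0)"
        using ls ij by (intro sum.cong refl) auto
      finally have "(rdiag ls * W) $$ (i,j) = (\<Sum>k<n. if k = i then complex_of_real (ls ! i) * W $$ (i,j) else 0)" .
      thus "(rdiag ls * W) $$ (i,j) = complex_of_real (ls ! i) * W $$ (i,j)" using ij by (simp add: sum.delta)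
    qed
    have "W $$ (i,j) * complex_of_real (l ! j) = complex_of_real (m ! i) * W $$ (i,j)"
      using arg_cong[OF comm, of "\<lambda>M. M $$ (i,j)"] e1[OF l] e2[OF m] by simp
    hence "W $$ (i,j) = 0 \<or> l ! j = m ! i" by auto
    hence "W $$ (i,j) * complex_of_real (map f l ! j) = complex_of_real (map f m ! i) * W $$ (i,j)"
      using ij l m by auto
    thus "(W * rdiag (map f l)) $$ (i,j) = (rdiag (map f m) * W) $$ (i,j)"
      using e1[of "map f l"] e2[of "map f m"] l m by simp
  qed (insert W l m, auto)
  have "udiag V (map f m) = V * rdiag (map f m) * (W * adj U)"
  proof -
    have "W * adj U = adj V" unfolding W_def using aV Uc aU by (simp add: assoc UU one_sq)
    thus ?thesis unfolding udiag_def by simp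
  qed
  also have "\<dots> = V * (rdiag (map f m) * W) * adj U" using Vc dm W aU by (simp add: assoc mult_sq one_sq)
  also have "\<dots> = V * (W * rdiag (map f l)) * adj U" using commf by simp
  also have "\<dots> = (V * adj V) * U * rdiag (map f l) * adj U"
    unfolding W_def using Vc aV Uc dl aU by (simp add: assoc mult_sq one_sq)
  also have "\<dots> = udiag U (map f l)" unfolding VV udiag_def using Uc by simp
  finally show ?thesis by simp
qed

lemma mat_fun_udiag: assumes U: "unitary n U" and l: "length ls = n"
  shows "mat_fun f (udiag U ls) = udiag U (map f ls)"
proof -
  have Uc: "U \<in> carrier_mat n n" using unitaryD[OF U] by auto
  have dr: "dim_row (udiag U ls) = n" using Uc by simp
  let ?P = "\<lambda>B. \<exists>U' ls'. unitary n U' \<and> length ls' = n \<and> udiag U ls = U' * rdiag ls' * adj U' \<and> B = U' * rdiag (map f ls') * adj U'"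
  have ex: "\<exists>B. ?P B" using U l unfolding udiag_def by blast
  have "?P (SOME B. ?P B)" by (rule someI_ex[OF ex])
  then obtain U' ls' where U': "unitary n U'" and l': "length ls' = n"
    and eq: "udiag U ls = udiag U' ls'" and B: "(SOME B. ?P B) = udiag U' (map f ls')"
    unfolding udiag_def by blast
  have "mat_fun f (udiag U ls) = (SOME B. ?P B)" unfolding mat_fun_def dr by simp
  also have "\<dots> = udiag U (map f ls)" unfolding B using udiag_fun_eq[OF U' U l' l eq[symmetric]] .
  finally show ?thesis .
qed

lemma cinner_cscalar: "v \<in> carrier_vec n \<Longrightarrow> w \<in> carrier_vec n \<Longrightarrow> cinner v w = w \<bullet>c v"
  by (simp add: cinner_def scalar_prod_def atLeast0LessThan mult.commute)

lemma cinner_smult: "v \<in> carrier_vec n \<Longrightarrow> w \<in> carrier_vec n \<Longrightarrow>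
  cinner (a \<cdot>\<^sub>v v) (b \<cdot>\<^sub>v w) = cnj a * b * cinner v w"
  by (simp add: cinner_def sum_distrib_left mult_ac)

lemma unit_completion: assumes v: "v \<in> carrier_vec n" and v0: "v \<noteq> 0\<^sub>v n" and n: "n > 0"
  shows "\<exists>W c. unitary n W \<and> col W 0 = c \<cdot>\<^sub>v v"
proof -
  interpret cof_vec_space n "TYPE(complex)" .
  define b where "b = basis_completion v"
  define ws where "ws = gram_schmidt n b"
  from basis_completion[OF v v0, folded b_def]
  have dist_b: "distinct b" and indep: "\<not> lin_dep (set b)" and bc: "set b \<subseteq> carrier_vec n"
    and hdb: "hd b = v" and len_b: "length b = n" by auto
  from hdb len_b n obtain vs where bv: "b = v # vs" by (cases b, auto)
  from gram_schmidt_result[OF bc dist_b indep refl, folded ws_def]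
  have ws: "set ws \<subseteq> carrier_vec n" "corthogonal ws" "length ws = n"
    by (auto simp: len_b)
  from gram_schmidt_hd[OF v, of vs, folded bv] have hdws: "hd ws = v" unfolding ws_def .
  have wsc: "\<And>a. a < n \<Longrightarrow> ws ! a \<in> carrier_vec n" using ws by auto
  define r where "r = (\<lambda>a. Re (cinner (ws ! a) (ws ! a)))"
  have rpos: "\<And>a. a < n \<Longrightarrow> r a > 0 \<and> cinner (ws ! a) (ws ! a) = complex_of_real (r a)"
  proof -
    fix a assume a: "a < n"
    have ge: "ws ! a \<bullet>c ws ! a \<ge> 0" by auto
    have ne: "ws ! a \<bullet>c ws ! a \<noteq> 0" using corthogonalD[OF ws(2), of a a] a ws(3) by auto
    have eq: "cinner (ws ! a) (ws ! a) = ws ! a \<bullet>c ws ! a" using wsc[OF a] by (simp add: cinner_cscalar)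
    show "r a > 0 \<and> cinner (ws ! a) (ws ! a) = complex_of_real (r a)"
      using ge ne unfolding r_def eq by (auto simp: less_eq_complex_def complex_eq_iff)
  qed
  define ws' where "ws' = map (\<lambda>a. complex_of_real (1 / sqrt (r a)) \<cdot>\<^sub>v ws ! a) [0..<n]"
  define W where "W = mat_of_cols n ws'"
  have len': "length ws' = n" unfolding ws'_def by simp
  have ws'c: "\<And>a. a < n \<Longrightarrow> ws' ! a \<in> carrier_vec n" unfolding ws'_def using wsc by simp
  have W: "W \<in> carrier_mat n n" unfolding W_def using len' by (metis mat_of_cols_carrier(1))
  have colW: "\<And>a. a < n \<Longrightarrow> col W a = ws' ! a" unfolding W_def using len' ws'c by simp
  have orth: "\<And>a b. a < n \<Longrightarrow> b < n \<Longrightarrow> cinner (ws' ! a) (ws' ! b) = (if a = b then 1 else 0)"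
  proof -
    fix a b assume a: "a < n" and b: "b < n"
    have "cinner (ws' ! a) (ws' ! b) = complex_of_real (1 / sqrt (r a)) * complex_of_real (1 / sqrt (r b)) * cinner (ws ! a) (ws ! b)"
      unfolding ws'_def using a b wsc by (simp add: cinner_smult[of _ n])
    moreover have "a \<noteq> b \<Longrightarrow> cinner (ws ! a) (ws ! b) = 0"
      using corthogonalD[OF ws(2), of b a] a b ws(3) cinner_cscalar[OF wsc[OF a] wsc[OF b]] by simp
    moreover have "a = b \<Longrightarrow> complex_of_real (1 / sqrt (r a)) * complex_of_real (1 / sqrt (r b)) * cinner (ws ! a) (ws ! b) = 1"
    proof -
      assume ab: "a = b"
      have "complex_of_real (1 / sqrt (r a)) * complex_of_real (1 / sqrt (r a)) * complex_of_real (r a) = complex_of_real (1 / sqrt (r a) * (1 / sqrt (r a)) * r a)"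
        by (simp only: of_real_mult)
      also have "1 / sqrt (r a) * (1 / sqrt (r a)) * r a = 1"
      proof -
        have s1: "sqrt (r a) * sqrt (r a) = r a" and s2: "sqrt (r a) > 0" using rpos[OF a] by auto
        show ?thesis using s1 s2 by (simp add: field_simps)
      qed
      finally show ?thesis using ab rpos[OF a] by simp
    qed
    ultimately show "cinner (ws' ! a) (ws' ! b) = (if a = b then 1 else 0)" by auto
  qed
  have WW: "adj W * W = 1\<^sub>m n"
  proof (rule eq_matI)
    fix i j assume "i < dim_row (1\<^sub>m n)" "j < dim_col (1\<^sub>m n)"
    hence ij: "i < n" "j < n" by auto
    have "(adj W * W) $$ (i,j) = cinner (col W i) (col W j)"
      using W ij by (simp add: ent cinner_def)
    thus "(adj W * W) $$ (i,j) = 1\<^sub>m n $$ (i,j)" using ij colW orth by simp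
  qed (insert W, auto)
  have WW2: "W * adj W = 1\<^sub>m n" using mat_mult_left_right_inverse[OF _ W WW] W by simp
  have uW: "unitary n W" unfolding unitary_def using W WW WW2 by simp
  have ws0: "ws ! 0 = v" using hdws ws(3) n by (cases ws) auto
  have "col W 0 = complex_of_real (1 / sqrt (r 0)) \<cdot>\<^sub>v v"
    using colW[OF n] ws0 n unfolding ws'_def by simp
  thus ?thesis using uW by blast
qed

lemma conj_entry: assumes U: "U \<in> carrier_mat n n" and M: "M \<in> carrier_mat n n" and ab: "a < n" "b < n"
  shows "(adj U * M * U) $$ (a,b) = cinner (col U a) (M *\<^sub>v col U b)"
proof -
  have "(adj U * M * U) $$ (a,b) = (\<Sum>k<n. (\<Sum>j<n. cnj (U $$ (j,a)) * M $$ (j,k)) * U $$ (k,b))"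
    using U M ab by (simp add: ent)
  also have "\<dots> = (\<Sum>k<n. \<Sum>j<n. cnj (U $$ (j,a)) * (M $$ (j,k) * U $$ (k,b)))"
    by (simp add: sum_distrib_right sum_distrib_left mult_ac)
  also have "\<dots> = (\<Sum>j<n. \<Sum>k<n. cnj (U $$ (j,a)) * (M $$ (j,k) * U $$ (k,b)))"
    by (rule sum.swap)
  also have "\<dots> = cinner (col U a) (M *\<^sub>v col U b)"
    using U M ab by (simp add: cinner_def ent sum_distrib_left)
  finally show ?thesis .
qed

definition extm :: "complex mat \<Rightarrow> nat \<Rightarrow> complex mat" where
  "extm U m = mat (Suc m) (Suc m) (\<lambda>(i,j). if i = 0 \<and> j = 0 then 1 else if i = 0 \<or> j = 0 then 0 else U $$ (i - 1, j - 1))"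

lemma extm_carrier[simp]: "extm U m \<in> carrier_mat (Suc m) (Suc m)"
  by (simp add: extm_def)

lemma extm_dims[simp]: "dim_row (extm U m) = Suc m" "dim_col (extm U m) = Suc m"
  by (simp_all add: extm_def)

lemma ext_sum: assumes i: "i < Suc m" and j: "j < Suc m"
  shows "(\<Sum>a<Suc m. extm U m $$ (i,a) * complex_of_real ((d # l) ! a) * cnj (extm U m $$ (j,a))) =
    (if i = 0 \<and> j = 0 then complex_of_real d else if i = 0 \<or> j = 0 then 0
     else (\<Sum>a<m. U $$ (i - 1, a) * complex_of_real (l ! a) * cnj (U $$ (j - 1, a))))"
proof -
  have "(\<Sum>a<Suc m. extm U m $$ (i,a) * complex_of_real ((d # l) ! a) * cnj (extm U m $$ (j,a))) =
    extm U m $$ (i,0) * complex_of_real d * cnj (extm U m $$ (j,0)) +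
    (\<Sum>a<m. extm U m $$ (i,Suc a) * complex_of_real (l ! a) * cnj (extm U m $$ (j,Suc a)))"
    by (subst sum.lessThan_Suc_shift) simp
  also have "\<dots> = (if i = 0 \<and> j = 0 then complex_of_real d else if i = 0 \<or> j = 0 then 0
     else (\<Sum>a<m. U $$ (i - 1, a) * complex_of_real (l ! a) * cnj (U $$ (j - 1, a))))"
    using i j by (auto simp: extm_def)
  finally show ?thesis .
qed

lemma extm_unitary: assumes U: "unitary m U" shows "unitary (Suc m) (extm U m)"
proof -
  let ?B = "extm U m"
  have B: "?B \<in> carrier_mat (Suc m) (Suc m)" by simp
  have BB: "?B * adj ?B = 1\<^sub>m (Suc m)"
  proof (rule eq_matI)
    fix i j assume "i < dim_row (1\<^sub>m (Suc m))" "j < dim_col (1\<^sub>m (Suc m))"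
    hence ij: "i < Suc m" "j < Suc m" by auto
    have "(?B * adj ?B) $$ (i,j) = (\<Sum>a<Suc m. ?B $$ (i,a) * complex_of_real ((1 # replicate m 1) ! a) * cnj (?B $$ (j,a)))"
    proof -
      have "(?B * adj ?B) $$ (i,j) = (\<Sum>a<Suc m. ?B $$ (i,a) * cnj (?B $$ (j,a)))"
        using ij B by (simp add: ent del: sum.lessThan_Suc)
      also have "\<dots> = (\<Sum>a<Suc m. ?B $$ (i,a) * complex_of_real ((1 # replicate m 1) ! a) * cnj (?B $$ (j,a)))"
        by (intro sum.cong refl) (auto simp: nth_Cons split: nat.split)
      finally show ?thesis .
    qed
    also have "\<dots> = 1\<^sub>m (Suc m) $$ (i,j)"
    proof (cases "i = 0 \<or> j = 0")
      case True thus ?thesis unfolding ext_sum[OF ij] using ij by auto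
    next
      case False
      hence "(\<Sum>a<m. U $$ (i - 1, a) * complex_of_real (replicate m 1 ! a) * cnj (U $$ (j - 1, a))) =
        (\<Sum>a<m. U $$ (i - 1, a) * cnj (U $$ (j - 1, a)))" by (intro sum.cong refl) auto
      also have "\<dots> = (if i - 1 = j - 1 then 1 else 0)" using unitary_row_orth[OF U] ij False by auto
      finally show ?thesis unfolding ext_sum[OF ij] using ij False by auto
    qed
    finally show "(?B * adj ?B) $$ (i,j) = 1\<^sub>m (Suc m) $$ (i,j)" .
  qed (auto)
  have "adj ?B * ?B = 1\<^sub>m (Suc m)" using mat_mult_left_right_inverse[OF B _ BB] by simp
  thus ?thesis unfolding unitary_def using BB by simp
qed

lemma unitary_mult: assumes "unitary n U" "unitary n V" shows "unitary n (U * V)"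
proof -
  note u = unitaryD[OF assms(1)] and v = unitaryD[OF assms(2)]
  note assoc = assoc_mult_mat[of _ n n _ n _ n]
  have a: "adj (U * V) = adj V * adj U" using u v by (simp add: adj_mult)
  have "U * V * adj (U * V) = U * (V * adj V) * adj U" unfolding a using u(1) v(1) by (simp add: assoc mult_sq)
  also have "\<dots> = 1\<^sub>m n" using u v by (simp add: one_sq)
  finally have 1: "U * V * adj (U * V) = 1\<^sub>m n" .
  have "adj (U * V) * (U * V) = adj V * (adj U * U) * V" unfolding a using u(1) v(1) by (simp add: assoc mult_sq)
  also have "\<dots> = 1\<^sub>m n" using u v by (simp add: one_sq)
  finally show ?thesis unfolding unitary_def using u v 1 by simp
qed

theorem spectral: "hermitian n A \<Longrightarrow> \<exists>U ls. unitary n U \<and> length ls = n \<and> A = udiag U ls"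
proof (induction n arbitrary: A)
  case 0
  hence A: "A \<in> carrier_mat 0 0" by (simp add: hermitian_def)
  have "unitary 0 (1\<^sub>m 0)" unfolding unitary_def by simp
  moreover have "A = udiag (1\<^sub>m 0) []" using A by (intro eq_matI) (auto simp: udiag_def)
  ultimately show ?case by force
next
  case (Suc m A)
  let ?n = "Suc m"
  have A: "A \<in> carrier_mat ?n ?n" and hA: "adj A = A" using Suc.prems by (auto simp: hermitian_def)
  from spectrum_non_empty[OF A] obtain e where "eigenvalue A e" unfolding spectrum_def by auto
  from find_eigenvector[OF A this] obtain v where ev: "eigenvector A v e" by blast
  hence v: "v \<in> carrier_vec ?n" and v0: "v \<noteq> 0\<^sub>v ?n" and Av: "A *\<^sub>v v = e \<cdot>\<^sub>v v"
    using A unfolding eigenvector_def by auto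
  from unit_completion[OF v v0] obtain W c where W: "unitary ?n W" and cW: "col W 0 = c \<cdot>\<^sub>v v" by auto
  note w = unitaryD[OF W]
  define A' where "A' = adj W * A * W"
  have A': "A' \<in> carrier_mat ?n ?n" unfolding A'_def using w A by (simp add: mult_sq)
  have hA': "adj A' = A'" unfolding A'_def using w A hA by (simp add: adj_mult[of _ ?n ?n _ ?n] assoc_mult_mat[of _ ?n ?n _ ?n _ ?n] mult_sq)
  have AW0: "A *\<^sub>v col W 0 = e \<cdot>\<^sub>v col W 0"
    unfolding cW using A v Av by (simp add: mult_mat_vec smult_smult_assoc mult.commute)
  have col0: "\<And>i. i < ?n \<Longrightarrow> A' $$ (i,0) = (if i = 0 then e else 0)"
  proof -
    fix i assume i: "i < ?n"
    have "A' $$ (i,0) = cinner (col W i) (A *\<^sub>v col W 0)" unfolding A'_def using conj_entry[OF w(1) A i] by simp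
    also have "\<dots> = e * cinner (col W i) (col W 0)" unfolding AW0 by (simp add: cinner_def sum_distrib_left mult_ac)
    finally show "A' $$ (i,0) = (if i = 0 then e else 0)" using unitary_col_orth[OF W i] by simp
  qed
  have row0: "\<And>j. j < ?n \<Longrightarrow> A' $$ (0,j) = (if j = 0 then cnj e else 0)"
  proof -
    fix j assume j: "j < ?n"
    have "A' $$ (0,j) = adj A' $$ (0,j)" using hA' by simp
    also have "\<dots> = cnj (A' $$ (j,0))" using A' j by simp
    finally show "A' $$ (0,j) = (if j = 0 then cnj e else 0)" using col0[OF j] by simp
  qed
  have ereal: "cnj e = e" using row0[of 0] col0[of 0] by simp
  define d where "d = Re e"
  have ed: "e = complex_of_real d" using ereal unfolding d_def by (simp add: complex_eq_iff)
  define A3 where "A3 = mat m m (\<lambda>(i,j). A' $$ (Suc i, Suc j))"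
  have hA3: "hermitian m A3" unfolding hermitian_def
  proof
    show "A3 \<in> carrier_mat m m" unfolding A3_def by simp
    show "adj A3 = A3"
    proof (rule eq_matI)
      fix i j assume "i < dim_row A3" "j < dim_col A3"
      hence ij: "i < m" "j < m" unfolding A3_def by auto
      have "A' $$ (Suc i, Suc j) = cnj (A' $$ (Suc j, Suc i))"
        using arg_cong[OF hA', of "\<lambda>M. M $$ (Suc i, Suc j)"] A' ij by simp
      thus "adj A3 $$ (i,j) = A3 $$ (i,j)" unfolding A3_def using ij by simp
    qed (auto simp: A3_def)
  qed
  from Suc.IH[OF hA3] obtain U3 l3 where U3: "unitary m U3" and l3: "length l3 = m" and A3e: "A3 = udiag U3 l3"
    by blast
  define B where "B = extm U3 m"
  have uB: "unitary ?n B" unfolding B_def by (rule extm_unitary[OF U3])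
  have A'B: "A' = udiag B (d # l3)"
  proof (rule eq_matI)
    fix i j assume "i < dim_row (udiag B (d # l3))" "j < dim_col (udiag B (d # l3))"
    hence ij: "i < ?n" "j < ?n" unfolding B_def by auto
    have "udiag B (d # l3) $$ (i,j) = (\<Sum>a<?n. B $$ (i,a) * complex_of_real ((d # l3) ! a) * cnj (B $$ (j,a)))"
      using udiag_entry[OF _ _ ij] l3 unfolding B_def by simp
    also have "\<dots> = A' $$ (i,j)"
    proof (cases "i = 0 \<or> j = 0")
      case True thus ?thesis unfolding B_def ext_sum[OF ij] using ij col0 row0 ed ereal by auto
    next
      case False
      then obtain i' j' where ii: "i = Suc i'" "j = Suc j'" by (cases i; cases j) auto
      have "(\<Sum>a<m. U3 $$ (i - 1, a) * complex_of_real (l3 ! a) * cnj (U3 $$ (j - 1, a))) = udiag U3 l3 $$ (i', j')"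
        using udiag_entry[OF unitaryD(1)[OF U3] l3, of i' j'] ii ij by simp
      also have "\<dots> = A' $$ (i,j)" unfolding A3e[symmetric] A3_def using ii ij by simp
      finally show ?thesis unfolding B_def ext_sum[OF ij] using False by simp
    qed
    finally show "A' $$ (i,j) = udiag B (d # l3) $$ (i,j)" by simp
  qed (insert A' l3, auto simp: B_def)
  have "A = W * A' * adj W"
  proof -
    have "W * A' * adj W = (W * adj W) * A * (W * adj W)"
      unfolding A'_def using w(1) A by (simp add: assoc_mult_mat[of _ ?n ?n _ ?n _ ?n] mult_sq)
    also have "\<dots> = A" using w A by (simp add: one_sq)
    finally show ?thesis by simp
  qed
  also have "\<dots> = udiag (W * B) (d # l3)"
  proof -
    note b = unitaryD[OF uB]
    have D: "rdiag (d # l3) \<in> carrier_mat ?n ?n" using l3 by (metis rdiag_carrier length_Cons)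
    have "W * A' * adj W = W * B * rdiag (d # l3) * (adj B * adj W)"
      unfolding A'B udiag_def using w(1) b(1) D by (simp add: assoc_mult_mat[of _ ?n ?n _ ?n _ ?n] mult_sq)
    thus ?thesis unfolding udiag_def using w b by (simp add: adj_mult[of _ ?n ?n _ ?n])
  qed
  finally show ?case using unitary_mult[OF W uB] l3 by force
qed

definition outer :: "nat \<Rightarrow> complex vec \<Rightarrow> complex mat" where
  "outer n v = mat n n (\<lambda>(i,j). v $ i * cnj (v $ j))"

lemma cinner_smult_right: "dim_vec v = dim_vec w \<Longrightarrow> cinner w (c \<cdot>\<^sub>v v) = c * cinner w v"
  by (simp add: cinner_def sum_distrib_left mult_ac)

lemma outer_carrier[simp]: "outer n v \<in> carrier_mat n n"
  by (simp add: outer_def)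

lemma mtr_outer: fixes v :: "complex vec" assumes v: "v \<in> carrier_vec n" and B: "B \<in> carrier_mat n n"
  shows "mtr (outer n v * B) = cinner v (B *\<^sub>v v)"
proof -
  have "mtr (outer n v * B) = (\<Sum>i<n. \<Sum>k<n. v $ i * cnj (v $ k) * B $$ (k,i))"
    using v B by (simp add: mtr_def ent outer_def)
  also have "\<dots> = (\<Sum>k<n. \<Sum>i<n. cnj (v $ k) * (B $$ (k,i) * v $ i))"
    by (subst sum.swap) (simp add: mult_ac)
  also have "\<dots> = cinner v (B *\<^sub>v v)"
    using v B by (simp add: cinner_def ent sum_distrib_left)
  finally show ?thesis .
qed

lemma herm_cinner_real: assumes A: "hermitian n A" and v: "v \<in> carrier_vec n"
  shows "cnj (cinner v (A *\<^sub>v v)) = cinner v (A *\<^sub>v v)"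
proof -
  have Ac: "A \<in> carrier_mat n n" and hA: "adj A = A" using A by (auto simp: hermitian_def)
  have "cnj (cinner v (A *\<^sub>v v)) = cinner (A *\<^sub>v v) v" using Ac v by (subst cinner_cnj) auto
  also have "\<dots> = cinner (adj (adj A) *\<^sub>v v) v" by simp
  also have "\<dots> = cinner v (adj A *\<^sub>v v)" using Ac v by (subst cinner_adj[of _ n n]) auto
  finally show ?thesis using hA by simp
qed

lemma psdD: assumes "psd n A" shows "A \<in> carrier_mat n n" "adj A = A"
  "\<And>v. v \<in> carrier_vec n \<Longrightarrow> 0 \<le> Re (cinner v (A *\<^sub>v v))"
  "\<And>v. v \<in> carrier_vec n \<Longrightarrow> cinner v (A *\<^sub>v v) = complex_of_real (Re (cinner v (A *\<^sub>v v)))"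
proof -
  show "A \<in> carrier_mat n n" "adj A = A" using assms by (auto simp: psd_def hermitian_def)
  show "\<And>v. v \<in> carrier_vec n \<Longrightarrow> 0 \<le> Re (cinner v (A *\<^sub>v v))" using assms by (auto simp: psd_def)
  fix v :: "complex vec" assume v: "v \<in> carrier_vec n"
  have "cnj (cinner v (A *\<^sub>v v)) = cinner v (A *\<^sub>v v)"
    using herm_cinner_real[OF _ v] assms by (auto simp: psd_def)
  thus "cinner v (A *\<^sub>v v) = complex_of_real (Re (cinner v (A *\<^sub>v v)))"
    by (simp add: complex_eq_iff)
qed

lemma outer_mult_vec: fixes v w :: "complex vec" assumes v: "v \<in> carrier_vec n" and w: "w \<in> carrier_vec n"
  shows "outer n v *\<^sub>v w = cinner v w \<cdot>\<^sub>v v"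
proof (rule eq_vecI)
  fix i assume "i < dim_vec (cinner v w \<cdot>\<^sub>v v)"
  hence i: "i < n" using v by simp
  have "(outer n v *\<^sub>v w) $ i = (\<Sum>j<n. v $ i * cnj (v $ j) * w $ j)"
    using i v w by (simp add: ent outer_def)
  also have "\<dots> = (\<Sum>j<n. cnj (v $ j) * w $ j) * v $ i"
    by (simp add: sum_distrib_left sum_distrib_right mult_ac)
  also have "\<dots> = cinner v w * v $ i" using v by (simp add: cinner_def)
  finally show "(outer n v *\<^sub>v w) $ i = (cinner v w \<cdot>\<^sub>v v) $ i" using i v by simp
qed (insert v, auto simp: outer_def)

lemma psd_outer: fixes v :: "complex vec" assumes v: "v \<in> carrier_vec n" shows "psd n (outer n v)"
proof -
  have "adj (outer n v) = outer n v" by (rule eq_matI) (auto simp: outer_def)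
  moreover have "\<And>w. w \<in> carrier_vec n \<Longrightarrow> 0 \<le> Re (cinner w (outer n v *\<^sub>v w))"
  proof -
    fix w :: "complex vec" assume w: "w \<in> carrier_vec n"
    have "cinner w (outer n v *\<^sub>v w) = cinner v w * cinner w v"
      unfolding outer_mult_vec[OF v w] using v w by (simp add: cinner_smult_right)
    also have "\<dots> = cinner v w * cnj (cinner v w)" using v w by (subst cinner_cnj[symmetric]) auto
    finally show "0 \<le> Re (cinner w (outer n v *\<^sub>v w))" by (simp add: complex_mult_cnj)
  qed
  ultimately show ?thesis unfolding psd_def hermitian_def by simp
qed

lemma cptp_pos: assumes "cptp n \<Phi>" "psd n M" shows "psd n (\<Phi> M)"
proof -
  have M: "M \<in> carrier_mat n n" using psdD[OF assms(2)] by simp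
  have lin: "\<And>X. X \<in> carrier_mat n n \<Longrightarrow> \<Phi> X \<in> carrier_mat n n"
    using assms(1) by (auto simp: cptp_def Defs.linear_map_def)
  have "psd (1 * n) (ampliate 1 n \<Phi> M)"
    using assms by (auto simp: cptp_def completely_positive_def)
  moreover have "ampliate 1 n \<Phi> M = \<Phi> M"
  proof -
    have inner: "\<And>i j. i < n \<Longrightarrow> j < n \<Longrightarrow> mat n n (\<lambda>(a, b). M $$ ((i div n) * n + a, (j div n) * n + b)) = M"
      using M by (intro eq_matI) auto
    show ?thesis using lin[OF M] inner unfolding ampliate_def by (intro eq_matI) auto
  qed
  ultimately show ?thesis by simp
qed

lemma mult_if0: "(a::complex) * (if P then x else 0) = (if P then a * x else 0)" by simp


lemma quad_two: assumes A: "A \<in> carrier_mat n n" and ij: "i < n" "j < n"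
  and v: "v = vec n (\<lambda>k. (if k = i then x else 0) + (if k = j then y else 0))"
  shows "cinner v (A *\<^sub>v v) = cnj x * x * A $$ (i,i) + cnj x * y * A $$ (i,j) + cnj y * x * A $$ (j,i) + cnj y * y * A $$ (j,j)"
proof -
  have Av: "\<And>k. k < n \<Longrightarrow> (A *\<^sub>v v) $ k = A $$ (k,i) * x + A $$ (k,j) * y"
  proof -
    fix k assume k: "k < n"
    have "(A *\<^sub>v v) $ k = (\<Sum>l<n. (if l = i then A $$ (k,i) * x else 0) + (if l = j then A $$ (k,j) * y else 0))"
      using A k v by (simp add: ent distrib_left mult_if0 sum.distrib)
    also have "\<dots> = A $$ (k,i) * x + A $$ (k,j) * y" using ij by (simp add: sum.distrib sum.delta)
    finally show "(A *\<^sub>v v) $ k = A $$ (k,i) * x + A $$ (k,j) * y" .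
  qed
  have "cinner v (A *\<^sub>v v) = (\<Sum>k<n. (if k = i then cnj x * (A $$ (i,i) * x + A $$ (i,j) * y) else 0) + (if k = j then cnj y * (A $$ (j,i) * x + A $$ (j,j) * y) else 0))"
    unfolding cinner_def using v Av by (intro sum.cong) (auto simp: distrib_right)
  also have "\<dots> = cnj x * (A $$ (i,i) * x + A $$ (i,j) * y) + cnj y * (A $$ (j,i) * x + A $$ (j,j) * y)"
    using ij by (simp add: sum.distrib)
  finally show ?thesis by (simp add: algebra_simps)
qed

lemma polarization: assumes A: "A \<in> carrier_mat n n"
  and r: "\<And>v. v \<in> carrier_vec n \<Longrightarrow> Im (cinner v (A *\<^sub>v v)) = 0"
  shows "adj A = A"
proof (rule eq_matI)
  fix i j assume "i < dim_row A" "j < dim_col A"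
  hence ij: "i < n" "j < n" using A by auto
  define q where "q = (\<lambda>x y. cinner (vec n (\<lambda>k. (if k = i then x else 0) + (if k = j then y else 0)))
     (A *\<^sub>v vec n (\<lambda>k. (if k = i then x else 0) + (if k = j then y else 0))))"
  have qr: "\<And>x y. Im (q x y) = 0" unfolding q_def by (intro r) simp
  have qf: "\<And>x y. q x y = cnj x * x * A $$ (i,i) + cnj x * y * A $$ (i,j) + cnj y * x * A $$ (j,i) + cnj y * y * A $$ (j,j)"
    unfolding q_def using quad_two[OF A ij] by blast
  have jj: "Im (A $$ (j,j)) = 0" using qr[of 0 1] unfolding qf by simp
  have ii: "Im (A $$ (i,i)) = 0" using qr[of 1 0] unfolding qf by simp
  have 1: "Im (A $$ (i,j) + A $$ (j,i)) = 0" using qr[of 1 1] ii jj unfolding qf by simp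
  have 2: "Re (A $$ (i,j)) - Re (A $$ (j,i)) = 0" using qr[of 1 \<i>] ii jj unfolding qf by simp
  show "adj A $$ (i,j) = A $$ (i,j)" using ij A 1 2 by (simp add: complex_eq_iff)
qed (insert A, auto)

lemma qf_add: assumes A: "A \<in> carrier_mat n n" and B: "B \<in> carrier_mat n n" and u: "u \<in> carrier_vec n"
  shows "cinner u ((A + B) *\<^sub>v u) = cinner u (A *\<^sub>v u) + cinner u (B *\<^sub>v u)"
  using A B u by (simp add: cinner_def ent distrib_left distrib_right sum.distrib)

lemma qf_smult: assumes A: "A \<in> carrier_mat n n" and u: "u \<in> carrier_vec n"
  shows "cinner u ((k \<cdot>\<^sub>m A) *\<^sub>v u) = k * cinner u (A *\<^sub>v u)"
  using A u by (simp add: cinner_def ent sum_distrib_left mult_ac)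

lemma psd_udiag: assumes U: "unitary n U" and l: "length ls = n" and nn: "\<forall>a<n. ls ! a \<ge> 0"
  shows "psd n (udiag U ls)"
proof -
  have Uc: "U \<in> carrier_mat n n" using unitaryD[OF U] by auto
  have "\<And>v. v \<in> carrier_vec n \<Longrightarrow> 0 \<le> Re (cinner v (udiag U ls *\<^sub>v v))"
  proof -
    fix v :: "complex vec" assume v: "v \<in> carrier_vec n"
    have "Re (cinner v (udiag U ls *\<^sub>v v)) = (\<Sum>a<n. ls ! a * ((Re (cinner (col U a) v))^2 + (Im (cinner (col U a) v))^2))"
      unfolding cinner_udiag[OF Uc l v] Re_sum
      by (intro sum.cong refl) (simp add: power2_eq_square algebra_simps)
    also have "\<dots> \<ge> 0" using nn by (intro sum_nonneg) auto
    finally show "0 \<le> Re (cinner v (udiag U ls *\<^sub>v v))" .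
  qed
  thus ?thesis unfolding psd_def using hermitian_udiag[OF Uc l] by simp
qed

locale chan =
  fixes n :: nat and \<Phi> \<Phi>d :: "complex mat \<Rightarrow> complex mat"
  assumes npos: "n > 0" and cptp: "cptp n \<Phi>" and dual: "trace_dual n \<Phi> \<Phi>d"
begin

lemma Phi_carrier[simp]: "X \<in> carrier_mat n n \<Longrightarrow> \<Phi> X \<in> carrier_mat n n"
  using cptp by (auto simp: cptp_def Defs.linear_map_def)

lemma Phi_add: "X \<in> carrier_mat n n \<Longrightarrow> Y \<in> carrier_mat n n \<Longrightarrow> \<Phi> (X + Y) = \<Phi> X + \<Phi> Y"
  using cptp by (auto simp: cptp_def Defs.linear_map_def)

lemma Phi_smult: "X \<in> carrier_mat n n \<Longrightarrow> \<Phi> (c \<cdot>\<^sub>m X) = c \<cdot>\<^sub>m \<Phi> X"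
  using cptp by (auto simp: cptp_def Defs.linear_map_def)

lemma Phi_tp: "X \<in> carrier_mat n n \<Longrightarrow> mtr (\<Phi> X) = mtr X"
  using cptp by (auto simp: cptp_def trace_preserving_def)

lemma Phi_psd: "psd n X \<Longrightarrow> psd n (\<Phi> X)"
  using cptp_pos[OF cptp] .

lemma Phid_carrier[simp]: "Y \<in> carrier_mat n n \<Longrightarrow> \<Phi>d Y \<in> carrier_mat n n"
  using dual by (auto simp: trace_dual_def)

lemma duality: "X \<in> carrier_mat n n \<Longrightarrow> Y \<in> carrier_mat n n \<Longrightarrow> mtr (\<Phi> X * Y) = mtr (X * \<Phi>d Y)"
  using dual by (auto simp: trace_dual_def)

lemma quad_Phid: assumes v: "v \<in> carrier_vec n" and Y: "Y \<in> carrier_mat n n"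
  shows "cinner v (\<Phi>d Y *\<^sub>v v) = mtr (\<Phi> (outer n v) * Y)"
  using mtr_outer[OF v Phid_carrier[OF Y]] duality[OF outer_carrier Y] by simp

end

locale state = chan +
  fixes U :: "complex mat" and p :: "real list"
  assumes U: "unitary n U" and lp: "length p = n" and ppos: "\<forall>a<n. p ! a > 0" and psum: "sum_list p = 1"
begin

definition "G = udiag U p"

lemma Uc[simp]: "U \<in> carrier_mat n n" using unitaryD[OF U] by auto

lemma G_carrier[simp]: "G \<in> carrier_mat n n" unfolding G_def using lp by simp

lemma G_psd: "psd n G" unfolding G_def using psd_udiag[OF U lp] ppos by (simp add: less_imp_le)

lemma mtr_G: "mtr G = 1" unfolding G_def mtr_udiag1[OF U lp] psum by simp

lemma mtr_M_G: assumes M: "M \<in> carrier_mat n n"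
  shows "mtr (M * G) = (\<Sum>a<n. complex_of_real (p ! a) * cinner (col U a) (M *\<^sub>v col U a))"
  unfolding G_def using mtr_udiag[OF Uc lp M] .

lemma mtr_M: assumes M: "M \<in> carrier_mat n n"
  shows "mtr M = (\<Sum>a<n. cinner (col U a) (M *\<^sub>v col U a))"
proof -
  have "mtr M = mtr (M * udiag U (replicate n 1))" using udiag_ones[OF U] M by simp
  also have "\<dots> = (\<Sum>a<n. cinner (col U a) (M *\<^sub>v col U a))"
    using mtr_udiag[OF Uc _ M, of "replicate n 1"] by simp
  finally show ?thesis .
qed

definition "sig = \<Phi>d G"

lemma sig_carrier[simp]: "sig \<in> carrier_mat n n" unfolding sig_def by simp

lemma sig_quad: assumes v: "v \<in> carrier_vec n"
  shows "cinner v (sig *\<^sub>v v) = complex_of_real (\<Sum>a<n. p ! a * Re (cinner (col U a) (\<Phi> (outer n v) *\<^sub>v col U a)))"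
    and "Re (cinner v (v)) = 1 \<Longrightarrow> Re (cinner v (sig *\<^sub>v v)) > 0"
proof -
  let ?M = "\<Phi> (outer n v)"
  have Mp: "psd n ?M" using Phi_psd[OF psd_outer[OF v]] .
  have Mc: "?M \<in> carrier_mat n n" by simp
  have cu: "\<And>a. a < n \<Longrightarrow> col U a \<in> carrier_vec n" using Uc by simp
  have "cinner v (sig *\<^sub>v v) = mtr (?M * G)" unfolding sig_def using quad_Phid[OF v G_carrier] .
  also have "\<dots> = (\<Sum>a<n. complex_of_real (p ! a) * cinner (col U a) (?M *\<^sub>v col U a))" by (rule mtr_M_G[OF Mc])
  also have "\<dots> = (\<Sum>a<n. complex_of_real (p ! a * Re (cinner (col U a) (?M *\<^sub>v col U a))))"
    by (intro sum.cong refl, subst psdD(4)[OF Mp cu]) auto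
  finally show eq: "cinner v (sig *\<^sub>v v) = complex_of_real (\<Sum>a<n. p ! a * Re (cinner (col U a) (?M *\<^sub>v col U a)))"
    by simp
  assume v1: "Re (cinner v v) = 1"
  have "mtr ?M = mtr (outer n v)" by (rule Phi_tp) simp
  also have "\<dots> = cinner v v" using mtr_outer[OF v one_carrier_mat[of n]] v by (simp add: one_sq)
  finally have "Re (mtr ?M) = 1" using v1 by simp
  hence s1: "(\<Sum>a<n. Re (cinner (col U a) (?M *\<^sub>v col U a))) = 1" unfolding mtr_M[OF Mc] Re_sum .
  have nn: "\<And>a. a < n \<Longrightarrow> Re (cinner (col U a) (?M *\<^sub>v col U a)) \<ge> 0" using psdD(3)[OF Mp cu] by auto
  obtain a where a: "a < n" "Re (cinner (col U a) (?M *\<^sub>v col U a)) > 0"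
  proof (rule ccontr)
    assume "\<not> thesis"
    hence "\<And>a. a < n \<Longrightarrow> Re (cinner (col U a) (?M *\<^sub>v col U a)) = 0" using nn that by force
    thus False using s1 by simp
  qed
  have "(\<Sum>a<n. p ! a * Re (cinner (col U a) (?M *\<^sub>v col U a))) > 0"
  proof (rule sum_pos2[of _ a])
    show "a \<in> {..<n}" using a by simp
    show "0 < p ! a * Re (cinner (col U a) (?M *\<^sub>v col U a))" using a ppos by simp
    show "\<And>i. i \<in> {..<n} \<Longrightarrow> 0 \<le> p ! i * Re (cinner (col U i) (?M *\<^sub>v col U i))"
      using nn ppos by (simp add: less_imp_le)
  qed simp
  thus "Re (cinner v (sig *\<^sub>v v)) > 0" unfolding eq by simp
qed

lemma sig_herm: "hermitian n sig"
proof -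
  have "adj sig = sig"
    by (rule polarization[OF sig_carrier]) (simp add: sig_quad(1))
  thus ?thesis unfolding hermitian_def by simp
qed

end

lemma smult_smult_mat: "(a::complex) \<cdot>\<^sub>m (b \<cdot>\<^sub>m A) = (a * b) \<cdot>\<^sub>m A"
  by (rule eq_matI) auto

lemma one_smult_mat[simp]: "(1::complex) \<cdot>\<^sub>m A = A"
  by (rule eq_matI) auto

lemma distrib4: assumes "A \<in> carrier_mat n n" "B \<in> carrier_mat n n" "C \<in> carrier_mat n n" "D \<in> carrier_mat n n"
  shows "((A::complex mat) + B) * (C + D) = A * C + (A * D + (B * C + B * D))"
proof -
  have "(A + B) * (C + D) = (A * C + B * C) + (A * D + B * D)"
    using assms by (simp add: add_mult_distrib_mat[of _ n n _ _ n] mult_add_distrib_mat[of _ n n _ n] del: assoc_add_mat)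
  also have "\<dots> = A * C + (A * D + (B * C + B * D))"
    using assms by (intro eq_matI) (auto simp: mult_sq)
  finally show ?thesis .
qed

lemma expand_ZGZ: assumes W: "W \<in> carrier_mat n n" and G: "G \<in> carrier_mat n n"
  shows "(complex_of_real x \<cdot>\<^sub>m W + (-1) \<cdot>\<^sub>m 1\<^sub>m n) * G * (complex_of_real x \<cdot>\<^sub>m W + (-1) \<cdot>\<^sub>m 1\<^sub>m n) =
    complex_of_real (x * x) \<cdot>\<^sub>m (W * G * W) + (complex_of_real (- x) \<cdot>\<^sub>m (W * G) + (complex_of_real (- x) \<cdot>\<^sub>m (G * W) + G))"
proof -
  have 1: "(complex_of_real x \<cdot>\<^sub>m W + (-1) \<cdot>\<^sub>m 1\<^sub>m n) * G = complex_of_real x \<cdot>\<^sub>m (W * G) + (-1) \<cdot>\<^sub>m G"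
    using W G by (simp add: add_mult_distrib_mat[of _ n n] mult_smult_assoc_mat[of _ n n _ n] one_sq)
  have a: "complex_of_real x \<cdot>\<^sub>m (W * G) * (complex_of_real x \<cdot>\<^sub>m W) = complex_of_real (x * x) \<cdot>\<^sub>m (W * G * W)"
    using W G by (simp add: mult_smult_assoc_mat[of _ n n _ n] mult_smult_distrib[of _ n n _ n] smult_smult_mat mult_sq)
  have b: "complex_of_real x \<cdot>\<^sub>m (W * G) * ((-1) \<cdot>\<^sub>m 1\<^sub>m n) = complex_of_real (- x) \<cdot>\<^sub>m (W * G)"
    using W G by (simp add: mult_smult_assoc_mat[of _ n n _ n] mult_smult_distrib[of _ n n _ n] smult_smult_mat mult_sq one_sq)
  have c: "(-1) \<cdot>\<^sub>m G * (complex_of_real x \<cdot>\<^sub>m W) = complex_of_real (- x) \<cdot>\<^sub>m (G * W)"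
    using W G by (simp add: mult_smult_assoc_mat[of _ n n _ n] mult_smult_distrib[of _ n n _ n] smult_smult_mat mult_sq)
  have d: "(-1) \<cdot>\<^sub>m G * ((-1) \<cdot>\<^sub>m 1\<^sub>m n) = G"
    using W G by (simp add: mult_smult_assoc_mat[of _ n n _ n] mult_smult_distrib[of _ n n _ n] smult_smult_mat mult_sq one_sq)
  show ?thesis unfolding 1 using W G
    by (subst distrib4[of _ n]) (auto simp: a b c d mult_sq)
qed

lemma psd_sandwich: assumes G: "psd n G" and Z: "Z \<in> carrier_mat n n" and hZ: "adj Z = Z"
  shows "psd n (Z * G * Z)"
proof -
  have Gc: "G \<in> carrier_mat n n" and hG: "adj G = G" using psdD[OF G] by auto
  have "adj (Z * G * Z) = adj Z * adj (Z * G)" using Z Gc by (subst adj_mult[of _ n n _ n]) (auto simp: mult_sq)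
  also have "\<dots> = Z * G * Z" using Z Gc hZ hG by (simp add: adj_mult[of _ n n _ n] assoc_mult_mat[of _ n n _ n _ n] mult_sq)
  finally have h: "adj (Z * G * Z) = Z * G * Z" .
  have "\<And>v. v \<in> carrier_vec n \<Longrightarrow> 0 \<le> Re (cinner v ((Z * G * Z) *\<^sub>v v))"
  proof -
    fix v :: "complex vec" assume v: "v \<in> carrier_vec n"
    have "(Z * G * Z) *\<^sub>v v = Z *\<^sub>v (G *\<^sub>v (Z *\<^sub>v v))" using Z Gc v by (simp add: mult_sq assoc_mult_mat_vec[of _ n n _ n])
    hence "cinner v ((Z * G * Z) *\<^sub>v v) = cinner (adj Z *\<^sub>v v) (G *\<^sub>v (Z *\<^sub>v v))"
      using cinner_adj[OF Z v, of "G *\<^sub>v (Z *\<^sub>v v)"] Z Gc v by simp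
    thus "0 \<le> Re (cinner v ((Z * G * Z) *\<^sub>v v))" using psdD(3)[OF G, of "Z *\<^sub>v v"] Z v hZ by simp
  qed
  thus ?thesis unfolding psd_def hermitian_def using h Z Gc by (simp add: mult_sq)
qed

locale full = state +
  fixes V :: "complex mat" and s :: "real list"
  assumes V: "unitary n V" and ls: "length s = n" and sig_eq: "sig = udiag V s"
begin

lemma Vc[simp]: "V \<in> carrier_mat n n" using unitaryD[OF V] by auto

lemma spos: "b < n \<Longrightarrow> s ! b > 0"
proof -
  assume b: "b < n"
  have cb: "col V b \<in> carrier_vec n" using b by simp
  have "Re (cinner (col V b) (col V b)) = 1" using unitary_col_orth[OF V b b] by simp
  from sig_quad(2)[OF cb this] show "s ! b > 0"
    unfolding sig_eq cinner_udiag_col[OF V ls b] by simp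
qed

definition "e b = Re (cinner (col V b) (G *\<^sub>v col V b))"
definition "c a = Re (cinner (col U a) (\<Phi> G *\<^sub>v col U a))"

lemma e_nn: "b < n \<Longrightarrow> e b \<ge> 0" unfolding e_def using psdD(3)[OF G_psd] by simp

lemma c_nn: "a < n \<Longrightarrow> c a \<ge> 0" unfolding c_def using psdD(3)[OF Phi_psd[OF G_psd]] by simp

lemma mtr_G_V: "mtr (G * udiag V (map f s)) = complex_of_real (\<Sum>b<n. f (s ! b) * e b)"
proof -
  have "mtr (G * udiag V (map f s)) = (\<Sum>b<n. complex_of_real (map f s ! b) * cinner (col V b) (G *\<^sub>v col V b))"
    using mtr_udiag[OF Vc _ G_carrier, of "map f s"] ls by simp
  also have "\<dots> = (\<Sum>b<n. complex_of_real (f (s ! b) * e b))"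
    unfolding e_def using ls by (intro sum.cong refl, subst psdD(4)[OF G_psd]) auto
  finally show ?thesis by simp
qed

lemma sum_e: "(\<Sum>b<n. e b) = 1"
proof -
  have "udiag V (map (\<lambda>_. 1) s) = 1\<^sub>m n" using udiag_ones[OF V] ls by (simp add: map_replicate_const)
  hence "mtr G = complex_of_real (\<Sum>b<n. e b)" using mtr_G_V[of "\<lambda>_. 1"] by (simp add: one_sq)
  thus ?thesis using mtr_G by (simp add: complex_eq_iff)
qed

lemma sum_c: "(\<Sum>a<n. c a) = 1"
proof -
  have "mtr (\<Phi> G) = 1" using Phi_tp[OF G_carrier] mtr_G by simp
  hence "Re (\<Sum>a<n. cinner (col U a) (\<Phi> G *\<^sub>v col U a)) = 1" using mtr_M[of "\<Phi> G"] by simp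
  thus ?thesis unfolding c_def Re_sum .
qed

end

context full begin

lemma Phi_qf_lin: assumes A: "A \<in> carrier_mat n n" "B \<in> carrier_mat n n" "C \<in> carrier_mat n n" and u: "u \<in> carrier_vec n"
  shows "Re (cinner u (\<Phi> (complex_of_real k1 \<cdot>\<^sub>m A + (complex_of_real k2 \<cdot>\<^sub>m B + (complex_of_real k3 \<cdot>\<^sub>m C + G))) *\<^sub>v u)) =
    k1 * Re (cinner u (\<Phi> A *\<^sub>v u)) + k2 * Re (cinner u (\<Phi> B *\<^sub>v u)) + k3 * Re (cinner u (\<Phi> C *\<^sub>v u)) + Re (cinner u (\<Phi> G *\<^sub>v u))"
proof -
  have "\<Phi> (complex_of_real k1 \<cdot>\<^sub>m A + (complex_of_real k2 \<cdot>\<^sub>m B + (complex_of_real k3 \<cdot>\<^sub>m C + G))) =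
    complex_of_real k1 \<cdot>\<^sub>m \<Phi> A + (complex_of_real k2 \<cdot>\<^sub>m \<Phi> B + (complex_of_real k3 \<cdot>\<^sub>m \<Phi> C + \<Phi> G))"
    using A by (simp add: Phi_add Phi_smult)
  thus ?thesis using A u by (simp add: qf_add[of _ n] qf_smult[of _ n])
qed

lemma choi: assumes t: "0 < t" "t \<le> 1"
  shows "(\<Sum>b<n. 1 / (t * s ! b + 1 - t) * e b) \<le> (\<Sum>a<n. c a / (t * p ! a + 1 - t))"
proof -
  define f1 where "f1 = (\<lambda>r. 1 / (t * r + 1 - t))"
  define x where "x = (\<lambda>a. t * p ! a + 1 - t)"
  have xpos: "\<And>a. a < n \<Longrightarrow> x a > 0"
  proof -
    fix a assume "a < n" hence "p ! a > 0" using ppos by auto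
    hence "t * p ! a > 0" using t by simp
    thus "x a > 0" unfolding x_def using t by simp
  qed
  have fpos: "\<And>b. b < n \<Longrightarrow> (t * s ! b + 1 - t) > 0"
  proof -
    fix b assume "b < n" hence "s ! b > 0" using spos by auto
    hence "t * s ! b > 0" using t by simp
    thus "(t * s ! b + 1 - t) > 0" using t by simp
  qed
  define W where "W = udiag V (map f1 s)"
  have Wc[simp]: "W \<in> carrier_mat n n" unfolding W_def using ls by simp
  have hW: "adj W = W" unfolding W_def using adj_udiag[OF Vc] ls by simp
  define Z where "Z = (\<lambda>a. complex_of_real (x a) \<cdot>\<^sub>m W + (-1) \<cdot>\<^sub>m 1\<^sub>m n)"
  have Zc: "\<And>a. Z a \<in> carrier_mat n n" unfolding Z_def by simp
  have hZ: "\<And>a. adj (Z a) = Z a" unfolding Z_def using hW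
    by (simp add: adj_add[of _ n n] adj_smult)
  define R1 where "R1 = (\<lambda>a. Re (cinner (col U a) (\<Phi> (W * G * W) *\<^sub>v col U a)))"
  define R2 where "R2 = (\<lambda>a. Re (cinner (col U a) (\<Phi> (W * G) *\<^sub>v col U a)))"
  define R3 where "R3 = (\<lambda>a. Re (cinner (col U a) (\<Phi> (G * W) *\<^sub>v col U a)))"
  have T: "\<And>a. a < n \<Longrightarrow> 0 \<le> x a * x a * R1 a + (- x a) * R2 a + (- x a) * R3 a + c a"
  proof -
    fix a assume a: "a < n"
    have cu: "col U a \<in> carrier_vec n" using a by simp
    have h0: "0 \<le> Re (cinner (col U a) (\<Phi> (Z a * G * Z a) *\<^sub>v col U a))"
      using psdD(3)[OF Phi_psd[OF psd_sandwich[OF G_psd Zc hZ]] cu] .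
    have Zexp: "Z a * G * Z a = complex_of_real (x a * x a) \<cdot>\<^sub>m (W * G * W) + (complex_of_real (- x a) \<cdot>\<^sub>m (W * G) + (complex_of_real (- x a) \<cdot>\<^sub>m (G * W) + G))"
      unfolding Z_def by (rule expand_ZGZ[OF Wc G_carrier])
    have eq: "Re (cinner (col U a) (\<Phi> (complex_of_real (x a * x a) \<cdot>\<^sub>m (W * G * W) + (complex_of_real (- x a) \<cdot>\<^sub>m (W * G) + (complex_of_real (- x a) \<cdot>\<^sub>m (G * W) + G))) *\<^sub>v col U a))
      = x a * x a * R1 a + (- x a) * R2 a + (- x a) * R3 a + c a"
      unfolding R1_def R2_def R3_def c_def by (rule Phi_qf_lin[OF _ _ _ cu]) (auto simp: mult_sq)
    show "0 \<le> x a * x a * R1 a + (- x a) * R2 a + (- x a) * R3 a + c a"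
      using h0 unfolding Zexp eq .
  qed
  have "0 \<le> (\<Sum>a<n. (x a * x a * R1 a + (- x a) * R2 a + (- x a) * R3 a + c a) / x a)"
    using T xpos by (intro sum_nonneg) (simp add: less_imp_le)
  also have "\<dots> = (\<Sum>a<n. x a * R1 a) - (\<Sum>a<n. R2 a) - (\<Sum>a<n. R3 a) + (\<Sum>a<n. c a / x a)"
  proof -
    have "\<And>a. a < n \<Longrightarrow> (x a * x a * R1 a + (- x a) * R2 a + (- x a) * R3 a + c a) / x a = x a * R1 a - R2 a - R3 a + c a / x a"
    proof -
      fix a assume "a < n" hence xa: "x a \<noteq> 0" using xpos by force
      show "(x a * x a * R1 a + (- x a) * R2 a + (- x a) * R3 a + c a) / x a = x a * R1 a - R2 a - R3 a + c a / x a"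
        using xa by (simp add: field_simps)
    qed
    hence "(\<Sum>a<n. (x a * x a * R1 a + (- x a) * R2 a + (- x a) * R3 a + c a) / x a) = (\<Sum>a<n. x a * R1 a - R2 a - R3 a + c a / x a)"
      by (intro sum.cong refl) auto
    thus ?thesis by (simp add: sum.distrib sum_subtractf)
  qed
  finally have main: "0 \<le> (\<Sum>a<n. x a * R1 a) - (\<Sum>a<n. R2 a) - (\<Sum>a<n. R3 a) + (\<Sum>a<n. c a / x a)" .
  have s1: "(\<Sum>a<n. x a * R1 a) = t * Re (mtr (W * G * W * sig)) + (1 - t) * Re (mtr (W * G * W))"
  proof -
    have "(\<Sum>a<n. x a * R1 a) = t * (\<Sum>a<n. p ! a * R1 a) + (1 - t) * (\<Sum>a<n. R1 a)"
    proof -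
      have "(\<Sum>a<n. x a * R1 a) = (\<Sum>a<n. t * (p ! a * R1 a) + (1 - t) * R1 a)"
        unfolding x_def by (intro sum.cong refl) (simp add: algebra_simps)
      thus ?thesis by (simp only: sum.distrib sum_distrib_left[symmetric])
    qed
    moreover have "(\<Sum>a<n. p ! a * R1 a) = Re (mtr (W * G * W * sig))"
    proof -
      have "mtr (\<Phi> (W * G * W) * G) = mtr (W * G * W * sig)" unfolding sig_def by (rule duality) (auto simp: mult_sq)
      moreover have "Re (mtr (\<Phi> (W * G * W) * G)) = (\<Sum>a<n. p ! a * R1 a)"
        unfolding mtr_M_G[OF Phi_carrier[OF mult_sq[OF mult_sq[OF Wc G_carrier] Wc]]] R1_def Re_sum by simp
      ultimately show ?thesis by simp
    qed
    moreover have "(\<Sum>a<n. R1 a) = Re (mtr (W * G * W))"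
      unfolding R1_def using mtr_M[of "\<Phi> (W * G * W)"] Phi_tp[of "W * G * W"] by (simp add: mult_sq Re_sum)
    ultimately show ?thesis by simp
  qed
  have s2: "(\<Sum>a<n. R2 a) = Re (mtr (W * G))"
    unfolding R2_def using mtr_M[of "\<Phi> (W * G)"] Phi_tp[of "W * G"] by (simp add: mult_sq Re_sum)
  have s3: "(\<Sum>a<n. R3 a) = Re (mtr (G * W))"
    unfolding R3_def using mtr_M[of "\<Phi> (G * W)"] Phi_tp[of "G * W"] by (simp add: mult_sq Re_sum)
  note assoc = assoc_mult_mat[of _ n n _ n _ n]
  have sigc: "sig = udiag V (map (\<lambda>r. r) s)" using sig_eq by simp
  have WsW: "W * sig * W = udiag V (map (\<lambda>r. f1 r * r * f1 r) s)"
  proof -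
    have 1: "udiag V (map f1 s) * udiag V (map (\<lambda>r. r) s) = udiag V (map (\<lambda>r. f1 r * r) s)" by (rule udiag_mult_map[OF V ls])
    have 2: "udiag V (map (\<lambda>r. f1 r * r) s) * udiag V (map f1 s) = udiag V (map (\<lambda>r. f1 r * r * f1 r) s)" by (rule udiag_mult_map[OF V ls])
    show ?thesis unfolding W_def sig_eq using 1 2 by simp
  qed
  have WW: "W * W = udiag V (map (\<lambda>r. f1 r * f1 r) s)"
    unfolding W_def using udiag_mult_map[OF V ls] by simp
  have t1: "mtr (W * G * W * sig) = mtr (G * (W * sig * W))"
  proof -
    have "mtr (W * G * W * sig) = mtr (W * (G * W * sig))" using G_carrier by (simp add: assoc mult_sq)
    also have "\<dots> = mtr ((G * W * sig) * W)" by (rule mtr_comm[of _ n n]) (auto simp: mult_sq)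
    also have "\<dots> = mtr (G * (W * sig * W))" using G_carrier by (simp add: assoc mult_sq)
    finally show ?thesis .
  qed
  have t2: "mtr (W * G * W) = mtr (G * (W * W))"
  proof -
    have "mtr (W * G * W) = mtr (W * (G * W))" using G_carrier by (simp add: assoc mult_sq)
    also have "\<dots> = mtr ((G * W) * W)" by (rule mtr_comm[of _ n n]) (auto simp: mult_sq)
    also have "\<dots> = mtr (G * (W * W))" using G_carrier by (simp add: assoc mult_sq)
    finally show ?thesis .
  qed
  have t3: "mtr (W * G) = mtr (G * W)" by (rule mtr_comm[of _ n n]) auto
  have r1: "Re (mtr (W * G * W * sig)) = (\<Sum>b<n. f1 (s ! b) * s ! b * f1 (s ! b) * e b)"
    unfolding t1 WsW mtr_G_V by simp
  have r2: "Re (mtr (W * G * W)) = (\<Sum>b<n. f1 (s ! b) * f1 (s ! b) * e b)"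
    unfolding t2 WW mtr_G_V by simp
  have r3: "Re (mtr (G * W)) = (\<Sum>b<n. f1 (s ! b) * e b)"
    unfolding W_def mtr_G_V by simp
  have comb: "t * (\<Sum>b<n. f1 (s ! b) * s ! b * f1 (s ! b) * e b) + (1 - t) * (\<Sum>b<n. f1 (s ! b) * f1 (s ! b) * e b)
     = (\<Sum>b<n. f1 (s ! b) * e b)"
  proof -
    have "\<And>b. b < n \<Longrightarrow> t * (f1 (s ! b) * s ! b * f1 (s ! b) * e b) + (1 - t) * (f1 (s ! b) * f1 (s ! b) * e b) = f1 (s ! b) * e b"
    proof -
      fix b assume b: "b < n"
      have "t * (f1 (s ! b) * s ! b * f1 (s ! b) * e b) + (1 - t) * (f1 (s ! b) * f1 (s ! b) * e b)
        = f1 (s ! b) * (f1 (s ! b) * (t * s ! b + 1 - t)) * e b" by (simp add: algebra_simps)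
      also have "f1 (s ! b) * (t * s ! b + 1 - t) = 1" unfolding f1_def using fpos[OF b] by simp
      finally show "t * (f1 (s ! b) * s ! b * f1 (s ! b) * e b) + (1 - t) * (f1 (s ! b) * f1 (s ! b) * e b) = f1 (s ! b) * e b" by simp
    qed
    hence "(\<Sum>b<n. t * (f1 (s ! b) * s ! b * f1 (s ! b) * e b) + (1 - t) * (f1 (s ! b) * f1 (s ! b) * e b)) = (\<Sum>b<n. f1 (s ! b) * e b)"
      by (intro sum.cong refl) auto
    thus ?thesis by (simp add: sum.distrib sum_distrib_left)
  qed
  have "0 \<le> (\<Sum>a<n. c a / x a) - (\<Sum>b<n. f1 (s ! b) * e b)"
    using main unfolding s1 s2 s3 t3 r1 r2 r3 comb by simp
  thus ?thesis unfolding f1_def x_def by simp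
qed

end

lemma pos_aff: fixes t r :: real assumes "0 \<le> t" "t \<le> 1" "r > 0" shows "t * r + 1 - t > 0"
proof (cases "t = 1")
  case True thus ?thesis using assms by simp
next
  case False hence "t < 1" using assms by simp
  moreover have "t * r \<ge> 0" using assms by simp
  ultimately show ?thesis by linarith
qed

lemma dln: fixes r t :: real assumes "t * r + 1 - t > 0"
  shows "((\<lambda>t. ln (t * r + 1 - t)) has_real_derivative ((r - 1) / (t * r + 1 - t))) (at t)"
  using assms by (auto intro!: derivative_eq_intros simp: field_simps)

lemma aux_frac: fixes e r t y :: real assumes y: "y = t * r + 1 - t" and y0: "y \<noteq> 0" and t0: "t \<noteq> 0"
  shows "e * ((r - 1) / y) = (e - 1 / y * e) / t"
proof -
  have "(e - 1 / y * e) / t = e * ((y - 1) / y) / t" using y0 by (simp add: field_simps)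
  also have "y - 1 = t * (r - 1)" unfolding y by (simp add: algebra_simps)
  also have "e * (t * (r - 1) / y) / t = e * ((r - 1) / y)" using t0 by simp
  finally show ?thesis by simp
qed

context full begin

lemma log_ineq: "(\<Sum>a<n. c a * ln (p ! a)) \<le> (\<Sum>b<n. e b * ln (s ! b))"
proof -
  define F where "F = (\<lambda>t. (\<Sum>b<n. e b * ln (t * s ! b + 1 - t)) - (\<Sum>a<n. c a * ln (t * p ! a + 1 - t)))"
  have F0: "F 0 = 0" unfolding F_def by simp
  have F1: "F 1 = (\<Sum>b<n. e b * ln (s ! b)) - (\<Sum>a<n. c a * ln (p ! a))" unfolding F_def by simp
  have "F 0 \<le> F 1"
  proof (rule DERIV_nonneg_imp_increasing_open[of 0 1 F])
    fix t :: real assume t: "0 < t" "t < 1"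
    have ys: "\<And>b. b < n \<Longrightarrow> t * s ! b + 1 - t > 0" using pos_aff t spos by simp
    have xs: "\<And>a. a < n \<Longrightarrow> t * p ! a + 1 - t > 0" using pos_aff t ppos by simp
    define D where "D = (\<Sum>b<n. e b * ((s ! b - 1) / (t * s ! b + 1 - t))) - (\<Sum>a<n. c a * ((p ! a - 1) / (t * p ! a + 1 - t)))"
    have "(F has_real_derivative D) (at t)"
    proof -
      have ys': "\<And>b. b < n \<Longrightarrow> t < t * s ! b + 1" using ys by (smt (verit))
      have xs': "\<And>a. a < n \<Longrightarrow> t < t * p ! a + 1" using xs by (smt (verit))
      show ?thesis unfolding F_def D_def
        by (intro DERIV_diff DERIV_sum DERIV_cmult dln) (auto simp: ys' xs')
    qed
    moreover have "D \<ge> 0"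
    proof -
      have e1: "\<And>b. b < n \<Longrightarrow> e b * ((s ! b - 1) / (t * s ! b + 1 - t)) = (e b - 1 / (t * s ! b + 1 - t) * e b) / t"
      proof -
        fix b assume b: "b < n"
        have "t * s ! b + 1 - t \<noteq> 0" using ys[OF b] by simp
        thus "e b * ((s ! b - 1) / (t * s ! b + 1 - t)) = (e b - 1 / (t * s ! b + 1 - t) * e b) / t"
          using t by (intro aux_frac) auto
      qed
      have c1: "\<And>a. a < n \<Longrightarrow> c a * ((p ! a - 1) / (t * p ! a + 1 - t)) = (c a - c a / (t * p ! a + 1 - t)) / t"
      proof -
        fix a assume a: "a < n"
        have "t * p ! a + 1 - t \<noteq> 0" using xs[OF a] by simp
        hence "c a * ((p ! a - 1) / (t * p ! a + 1 - t)) = (c a - 1 / (t * p ! a + 1 - t) * c a) / t"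
          using t by (intro aux_frac) auto
        thus "c a * ((p ! a - 1) / (t * p ! a + 1 - t)) = (c a - c a / (t * p ! a + 1 - t)) / t" by simp
      qed
      have "D = ((\<Sum>b<n. e b) - (\<Sum>b<n. 1 / (t * s ! b + 1 - t) * e b) - (\<Sum>a<n. c a) + (\<Sum>a<n. c a / (t * p ! a + 1 - t))) / t"
      proof -
        have "D = (\<Sum>b<n. (e b - 1 / (t * s ! b + 1 - t) * e b) / t) - (\<Sum>a<n. (c a - c a / (t * p ! a + 1 - t)) / t)"
          unfolding D_def using e1 c1 by simp
        also have "\<dots> = ((\<Sum>b<n. e b) - (\<Sum>b<n. 1 / (t * s ! b + 1 - t) * e b)) / t - ((\<Sum>a<n. c a) - (\<Sum>a<n. c a / (t * p ! a + 1 - t))) / t"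
          by (simp only: sum_divide_distrib[symmetric] sum_subtractf)
        finally show ?thesis by (simp add: diff_divide_distrib add_divide_distrib)
      qed
      also have "\<dots> = ((\<Sum>a<n. c a / (t * p ! a + 1 - t)) - (\<Sum>b<n. 1 / (t * s ! b + 1 - t) * e b)) / t"
        unfolding sum_e sum_c by simp
      also have "\<dots> \<ge> 0" using choi[of t] t by simp
      finally show ?thesis .
    qed
    ultimately show "\<exists>y. (F has_real_derivative y) (at t) \<and> 0 \<le> y" by blast
  next
    show "continuous_on {0..1} F"
    proof -
      have ys: "\<And>t b. t \<in> {0..1} \<Longrightarrow> b < n \<Longrightarrow> t * s ! b + 1 - t > 0" using pos_aff spos by simp
      have xs: "\<And>t a. t \<in> {0..1} \<Longrightarrow> a < n \<Longrightarrow> t * p ! a + 1 - t > 0" using pos_aff ppos by simp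
      show ?thesis unfolding F_def
        by (intro continuous_intros) (auto dest: ys xs)
    qed
  qed simp
  thus ?thesis using F0 F1 by simp
qed

end

lemma mtr_minus: "A \<in> carrier_mat n n \<Longrightarrow> B \<in> carrier_mat n n \<Longrightarrow> mtr (A - B) = mtr A - mtr B"
  by (simp add: mtr_def sum_subtractf)

lemma parseval: assumes V: "unitary n V" and w: "w \<in> carrier_vec n"
  shows "(\<Sum>b<n. cnj (cinner (col V b) w) * cinner (col V b) w) = cinner w w"
proof -
  have Vc: "V \<in> carrier_mat n n" using unitaryD[OF V] by auto
  have "cinner w (udiag V (replicate n 1) *\<^sub>v w) = (\<Sum>b<n. complex_of_real (replicate n 1 ! b) * (cnj (cinner (col V b) w) * cinner (col V b) w))"
    by (rule cinner_udiag[OF Vc _ w]) simp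
  thus ?thesis using udiag_ones[OF V] w by simp
qed

lemma supp_full: assumes V: "unitary n V" and l: "length d = n" and pos: "\<forall>b<n. d ! b > 0"
  shows "supp (udiag V d) = carrier_vec n"
proof
  have Vc: "V \<in> carrier_mat n n" using unitaryD[OF V] by auto
  show "supp (udiag V d) \<subseteq> carrier_vec n"
  proof
    fix y assume "y \<in> supp (udiag V d)"
    then obtain v where y: "y = udiag V d *\<^sub>v v" unfolding supp_def by blast
    have "dim_row V = n" using Vc by blast
    thus "y \<in> carrier_vec n" unfolding y carrier_vec_def by simp
  qed
  show "carrier_vec n \<subseteq> supp (udiag V d)"
  proof
    fix w :: "complex vec" assume w: "w \<in> carrier_vec n"
    have "udiag V d * udiag V (map inverse d) = udiag V (map2 (*) d (map inverse d))"
      using udiag_mult[OF V l] l by simp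
    also have "map2 (*) d (map inverse d) = replicate n 1"
      using l pos by (intro nth_equalityI) auto
    finally have inv: "udiag V d * udiag V (map inverse d) = 1\<^sub>m n" using udiag_ones[OF V] by simp
    have "w = udiag V d *\<^sub>v (udiag V (map inverse d) *\<^sub>v w)"
      using inv w Vc l by (simp add: assoc_mult_mat_vec[of _ n n _ n, symmetric])
    moreover have "udiag V (map inverse d) *\<^sub>v w \<in> carrier_vec (dim_col (udiag V d))"
    proof -
      have "udiag V (map inverse d) \<in> carrier_mat n n" using Vc l by simp
      from mult_mat_vec_carrier[OF this w] show ?thesis using Vc by simp
    qed
    ultimately show "w \<in> supp (udiag V d)" unfolding supp_def by blast
  qed
qed

context full begin

lemma dimUV[simp]: "dim_row U = n" "dim_col U = n" "dim_row V = n" "dim_col V = n"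
  using carrier_matD[OF Uc] carrier_matD[OF Vc] by auto

lemma mtr_G_V': assumes "length d = n" shows "mtr (G * udiag V d) = complex_of_real (\<Sum>b<n. d ! b * e b)"
proof -
  have "mtr (G * udiag V d) = (\<Sum>b<n. complex_of_real (d ! b) * cinner (col V b) (G *\<^sub>v col V b))"
    using mtr_udiag[OF Vc assms G_carrier] .
  also have "\<dots> = (\<Sum>b<n. complex_of_real (d ! b * e b))"
    unfolding e_def by (intro sum.cong refl, subst psdD(4)[OF G_psd]) auto
  finally show ?thesis by simp
qed

lemma mtr_G_U: assumes "length d = n" shows "mtr (G * udiag U d) = complex_of_real (\<Sum>a<n. d ! a * p ! a)"
proof -
  have "mtr (G * udiag U d) = (\<Sum>a<n. complex_of_real (d ! a) * cinner (col U a) (G *\<^sub>v col U a))"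
    using mtr_udiag[OF Uc assms G_carrier] .
  also have "\<dots> = (\<Sum>a<n. complex_of_real (d ! a * p ! a))"
    unfolding G_def by (intro sum.cong refl) (simp add: cinner_udiag_col[OF U lp])
  finally show ?thesis by simp
qed

lemma mtr_PhiG_U: assumes "length d = n" shows "Re (mtr (\<Phi> G * udiag U d)) = (\<Sum>a<n. d ! a * c a)"
proof -
  have "mtr (\<Phi> G * udiag U d) = (\<Sum>a<n. complex_of_real (d ! a) * cinner (col U a) (\<Phi> G *\<^sub>v col U a))"
    using mtr_udiag[OF Uc assms] by simp
  thus ?thesis unfolding c_def Re_sum by simp
qed

definition "N a b = Re (cnj (cinner (col U a) (col V b)) * cinner (col U a) (col V b))"

lemma N_nn: "N a b \<ge> 0" unfolding N_def by (simp add: complex_mult_cnj)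

lemma e_N: "b < n \<Longrightarrow> e b = (\<Sum>a<n. p ! a * N a b)"
proof -
  assume b: "b < n"
  have "cinner (col V b) (G *\<^sub>v col V b) = (\<Sum>a<n. complex_of_real (p ! a) * (cnj (cinner (col U a) (col V b)) * cinner (col U a) (col V b)))"
    unfolding G_def using b by (intro cinner_udiag[OF Uc lp]) simp
  thus ?thesis unfolding e_def N_def Re_sum by simp
qed

lemma N_row: "a < n \<Longrightarrow> (\<Sum>b<n. N a b) = 1"
proof -
  assume a: "a < n"
  have "\<And>b. b < n \<Longrightarrow> N a b = Re (cnj (cinner (col V b) (col U a)) * cinner (col V b) (col U a))"
  proof -
    fix b assume b: "b < n"
    have "cinner (col U a) (col V b) = cnj (cinner (col V b) (col U a))" using a b by (subst cinner_cnj) auto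
    thus "N a b = Re (cnj (cinner (col V b) (col U a)) * cinner (col V b) (col U a))"
      unfolding N_def by (simp add: mult.commute)
  qed
  hence "(\<Sum>b<n. N a b) = Re (\<Sum>b<n. cnj (cinner (col V b) (col U a)) * cinner (col V b) (col U a))"
    unfolding Re_sum by simp
  also have "\<dots> = Re (cinner (col U a) (col U a))" using parseval[OF V, of "col U a"] a by simp
  finally show ?thesis using unitary_col_orth[OF U a a] by simp
qed

lemma N_col: "b < n \<Longrightarrow> (\<Sum>a<n. N a b) = 1"
proof -
  assume b: "b < n"
  have "(\<Sum>a<n. N a b) = Re (cinner (col V b) (col V b))"
    unfolding N_def Re_sum[symmetric] using parseval[OF U, of "col V b"] b by simp
  thus ?thesis using unitary_col_orth[OF V b b] by simp
qed

lemma klein: assumes q: "\<forall>b<n. q b > 0" and qs: "(\<Sum>b<n. q b) = 1"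
  shows "(\<Sum>b<n. e b * ln (q b)) \<le> (\<Sum>a<n. p ! a * ln (p ! a))"
proof -
  have pp: "\<And>a. a < n \<Longrightarrow> p ! a > 0" using ppos by auto
  have "(\<Sum>b<n. e b * ln (q b)) - (\<Sum>a<n. p ! a * ln (p ! a)) = (\<Sum>a<n. \<Sum>b<n. p ! a * N a b * (ln (q b) - ln (p ! a)))"
  proof -
    have "(\<Sum>b<n. e b * ln (q b)) = (\<Sum>a<n. \<Sum>b<n. p ! a * N a b * ln (q b))"
      by (subst sum.swap) (simp add: e_N sum_distrib_right)
    moreover have "(\<Sum>a<n. p ! a * ln (p ! a)) = (\<Sum>a<n. \<Sum>b<n. p ! a * N a b * ln (p ! a))"
    proof (intro sum.cong refl)
      fix a assume "a \<in> {..<n}"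
      hence "(\<Sum>b<n. N a b) = 1" using N_row by simp
      thus "p ! a * ln (p ! a) = (\<Sum>b<n. p ! a * N a b * ln (p ! a))"
        by (simp add: sum_distrib_left[symmetric] sum_distrib_right[symmetric] mult.commute mult.left_commute)
    qed
    ultimately show ?thesis by (simp add: sum_subtractf right_diff_distrib)
  qed
  also have "\<dots> \<le> (\<Sum>a<n. \<Sum>b<n. p ! a * N a b * (q b / p ! a - 1))"
  proof (intro sum_mono)
    fix a b assume a: "a \<in> {..<n}" and b: "b \<in> {..<n}"
    have pa: "p ! a > 0" using pp a by simp
    have qb: "q b > 0" using q b by simp
    have "ln (q b) - ln (p ! a) = ln (q b / p ! a)" using pa qb by (simp add: ln_div)
    also have "\<dots> \<le> q b / p ! a - 1" using pa qb by (intro ln_le_minus_one) simp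
    finally show "p ! a * N a b * (ln (q b) - ln (p ! a)) \<le> p ! a * N a b * (q b / p ! a - 1)"
      using pa N_nn by (intro mult_left_mono) (auto simp: less_imp_le)
  qed
  also have "\<dots> = (\<Sum>a<n. \<Sum>b<n. N a b * q b) - (\<Sum>a<n. p ! a * (\<Sum>b<n. N a b))"
  proof -
    have "\<And>a b. a < n \<Longrightarrow> p ! a * N a b * (q b / p ! a - 1) = N a b * q b - p ! a * N a b"
      using pp by (simp add: field_simps) (metis less_irrefl)
    hence "(\<Sum>a<n. \<Sum>b<n. p ! a * N a b * (q b / p ! a - 1)) = (\<Sum>a<n. \<Sum>b<n. N a b * q b - p ! a * N a b)"
      by (intro sum.cong refl) auto
    thus ?thesis by (simp add: sum_subtractf sum_distrib_left)
  qed
  also have "\<dots> = 0"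
  proof -
    have "(\<Sum>a<n. \<Sum>b<n. N a b * q b) = (\<Sum>b<n. (\<Sum>a<n. N a b) * q b)"
      by (subst sum.swap) (simp add: sum_distrib_right)
    also have "\<dots> = 1" using qs N_col by simp
    finally have 1: "(\<Sum>a<n. \<Sum>b<n. N a b * q b) = 1" .
    have "(\<Sum>a<n. p ! a * (\<Sum>b<n. N a b)) = (\<Sum>a<n. p ! a)" using N_row by simp
    also have "\<dots> = 1" using psum lp by (simp add: sum_list_sum_nth atLeast0LessThan)
    finally show ?thesis using 1 by simp
  qed
  finally show ?thesis by simp
qed

lemma relent: assumes l: "length d = n" and pos: "\<forall>b<n. d ! b > 0"
  shows "rel_ent G (udiag V d) = ereal ((\<Sum>a<n. p ! a * ln (p ! a)) - (\<Sum>b<n. e b * ln (d ! b)))"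
proof -
  have "supp G \<subseteq> carrier_vec n"
  proof
    fix y assume "y \<in> supp G"
    then obtain v where y: "y = G *\<^sub>v v" unfolding supp_def by blast
    have "dim_row G = n" using G_carrier by blast
    thus "y \<in> carrier_vec n" unfolding y carrier_vec_def by simp
  qed
  hence sG: "supp G \<subseteq> supp (udiag V d)" unfolding supp_full[OF V l pos] .
  let ?lnp = "\<lambda>x::real. if 0 < x then ln x else 0"
  have lG: "mat_ln G = udiag U (map ?lnp p)" unfolding mat_ln_def G_def by (rule mat_fun_udiag[OF U lp])
  have lV: "mat_ln (udiag V d) = udiag V (map ?lnp d)" unfolding mat_ln_def by (rule mat_fun_udiag[OF V l])
  have "mtr (G * mat_ln G - G * mat_ln (udiag V d)) = mtr (G * mat_ln G) - mtr (G * mat_ln (udiag V d))"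
    unfolding lG lV using lp l by (intro mtr_minus[of _ n]) (auto simp: mult_sq)
  also have "mtr (G * mat_ln G) = complex_of_real (\<Sum>a<n. p ! a * ln (p ! a))"
    unfolding lG using mtr_G_U[of "map ?lnp p"] lp ppos by (simp add: mult.commute)
  also have "mtr (G * mat_ln (udiag V d)) = complex_of_real (\<Sum>b<n. e b * ln (d ! b))"
    unfolding lV using mtr_G_V'[of "map ?lnp d"] l pos by (simp add: mult.commute)
  finally have "mtr (G * mat_ln G - G * mat_ln (udiag V d)) = complex_of_real ((\<Sum>a<n. p ! a * ln (p ! a)) - (\<Sum>b<n. e b * ln (d ! b)))"
    by simp
  thus ?thesis unfolding rel_ent_def using sG mtr_G by simp
qed

end

theorem mainTheorem5:
  fixes n :: nat and H :: "complex mat" and \<beta> :: real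
    and \<Phi> \<Phi>d :: "complex mat \<Rightarrow> complex mat"
    and \<Gamma> \<gamma> :: "complex mat" and \<Delta> :: real
  assumes "n > 0" and "hermitian n H" and "\<beta> > 0"
    and "cptp n \<Phi>" and "trace_dual n \<Phi> \<Phi>d"
    and "\<Gamma> = (1 / mtr (mat_fun (\<lambda>x. exp (- \<beta> * x)) H)) \<cdot>\<^sub>m mat_fun (\<lambda>x. exp (- \<beta> * x)) H"
    and "\<Delta> = Re (mtr (\<Gamma> * H)) - Re (mtr (\<Phi> \<Gamma> * H))"
    and "\<gamma> = (1 / mtr (\<Phi>d \<Gamma>)) \<cdot>\<^sub>m \<Phi>d \<Gamma>"
  shows "ereal \<Delta> \<le> - (ereal (1 / \<beta>) * rel_ent \<Gamma> (\<Phi>d \<Gamma>))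
    \<and> - (ereal (1 / \<beta>) * rel_ent \<Gamma> (\<Phi>d \<Gamma>))
        = ereal (1 / \<beta>) * (ereal (ln (Re (mtr (\<Phi>d \<Gamma>)))) - rel_ent \<Gamma> \<gamma>)
    \<and> ereal (1 / \<beta>) * (ereal (ln (Re (mtr (\<Phi>d \<Gamma>)))) - rel_ent \<Gamma> \<gamma>)
        \<le> ereal (1 / \<beta>) * ereal (ln (Re (mtr (\<Phi>d \<Gamma>))))"
proof -
  note npos = assms(1) and bpos = assms(3)
  from spectral[OF assms(2)] obtain U l where U: "unitary n U" and ll: "length l = n" and Heq: "H = udiag U l"
    by blast
  have Uc: "U \<in> carrier_mat n n" using unitaryD[OF U] by auto
  let ?fe = "\<lambda>x. exp (- \<beta> * x)"
  have E: "mat_fun ?fe H = udiag U (map ?fe l)" unfolding Heq by (rule mat_fun_udiag[OF U ll])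
  define Z where "Z = sum_list (map ?fe l)"
  have Zsum: "Z = (\<Sum>a<n. ?fe (l ! a))" unfolding Z_def using ll by (simp add: sum_list_sum_nth atLeast0LessThan)
  have Zpos: "Z > 0" unfolding Zsum using npos by (intro sum_pos) auto
  have mtrE: "mtr (mat_fun ?fe H) = complex_of_real Z" unfolding E Z_def using mtr_udiag1[OF U] ll by simp
  define p where "p = map (\<lambda>x. ?fe x / Z) l"
  have lp: "length p = n" unfolding p_def using ll by simp
  have pnth: "\<And>a. a < n \<Longrightarrow> p ! a = ?fe (l ! a) / Z" unfolding p_def using ll by simp
  have ppos: "\<forall>a<n. p ! a > 0" using pnth Zpos by simp
  have psum': "(\<Sum>a<n. p ! a) = 1"
  proof -
    have "(\<Sum>a<n. p ! a) = (\<Sum>a<n. ?fe (l ! a)) / Z" using pnth by (simp add: sum_divide_distrib)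
    thus ?thesis using Zsum Zpos by simp
  qed
  have psum: "sum_list p = 1" using psum' lp by (simp add: sum_list_sum_nth atLeast0LessThan)
  have Geq: "\<Gamma> = udiag U p"
  proof -
    have mtrE': "mtr (udiag U (map ?fe l)) = complex_of_real Z" using mtrE unfolding E .
    have "\<Gamma> = complex_of_real (1 / Z) \<cdot>\<^sub>m udiag U (map ?fe l)" unfolding assms(6) E mtrE' by simp
    also have "\<dots> = udiag U (map (\<lambda>x. 1 / Z * x) (map ?fe l))" using udiag_smult[OF Uc, of "map ?fe l" "1 / Z"] ll by simp
    also have "map (\<lambda>x. 1 / Z * x) (map ?fe l) = p" unfolding p_def by simp
    finally show ?thesis .
  qed
  interpret st: state n \<Phi> \<Phi>d U p
    by unfold_locales (use npos assms(4,5) U lp ppos psum in auto)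
  have GG: "st.G = \<Gamma>" unfolding st.G_def Geq ..
  from spectral[OF st.sig_herm] obtain V s where V: "unitary n V" and ls: "length s = n" and seq: "st.sig = udiag V s"
    by blast
  interpret fu: full n \<Phi> \<Phi>d U p V s
    by unfold_locales (use V ls seq in auto)
  have sig: "\<Phi>d \<Gamma> = udiag V s" using seq unfolding st.sig_def GG .
  define T where "T = sum_list s"
  have Tsum: "T = (\<Sum>b<n. s ! b)" unfolding T_def using ls by (simp add: sum_list_sum_nth atLeast0LessThan)
  have Tpos: "T > 0" unfolding Tsum using npos fu.spos by (intro sum_pos) auto
  have mtrs: "mtr (\<Phi>d \<Gamma>) = complex_of_real T" unfolding sig T_def using mtr_udiag1[OF V ls] .
  have Vc: "V \<in> carrier_mat n n" using unitaryD[OF V] by auto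
  have geq: "\<gamma> = udiag V (map (\<lambda>r. 1 / T * r) s)"
    unfolding assms(8) sig mtr_udiag1[OF V ls] T_def[symmetric] using udiag_smult[OF Vc ls, of "1 / T"] by simp
  define A where "A = (\<Sum>a<n. p ! a * ln (p ! a))"
  define Cc where "Cc = (\<Sum>a<n. fu.c a * ln (p ! a))"
  define Es where "Es = (\<Sum>b<n. fu.e b * ln (s ! b))"
  have D1: "rel_ent \<Gamma> (\<Phi>d \<Gamma>) = ereal (A - Es)"
    unfolding sig unfolding GG[symmetric] A_def Es_def by (rule fu.relent[OF ls]) (use fu.spos in auto)
  have qpos: "\<forall>b<n. (map (\<lambda>r. 1 / T * r) s) ! b > 0" using ls fu.spos Tpos by simp
  have D2: "rel_ent \<Gamma> \<gamma> = ereal (A - (\<Sum>b<n. fu.e b * ln (s ! b / T)))"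
  proof -
    have "rel_ent \<Gamma> \<gamma> = ereal (A - (\<Sum>b<n. fu.e b * ln (map (\<lambda>r. 1 / T * r) s ! b)))"
      unfolding geq GG[symmetric] A_def by (rule fu.relent) (use ls qpos in auto)
    also have "(\<Sum>b<n. fu.e b * ln (map (\<lambda>r. 1 / T * r) s ! b)) = (\<Sum>b<n. fu.e b * ln (s ! b / T))"
      using ls by (intro sum.cong refl) simp
    finally show ?thesis .
  qed
  have lnT: "(\<Sum>b<n. fu.e b * ln (s ! b / T)) = Es - ln T"
  proof -
    have "(\<Sum>b<n. fu.e b * ln (s ! b / T)) = (\<Sum>b<n. fu.e b * ln (s ! b) - fu.e b * ln T)"
    proof (intro sum.cong refl)
      fix b assume "b \<in> {..<n}"
      hence sb: "s ! b > 0" using fu.spos by simp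
      show "fu.e b * ln (s ! b / T) = fu.e b * ln (s ! b) - fu.e b * ln T"
        using sb Tpos by (simp add: ln_div right_diff_distrib)
    qed
    also have "\<dots> = Es - ln T" unfolding Es_def sum_subtractf sum_distrib_right[symmetric] fu.sum_e by simp
    finally show ?thesis .
  qed
  have klein: "Es - ln T \<le> A"
  proof -
    have "(\<Sum>b<n. fu.e b * ln (s ! b / T)) \<le> A" unfolding A_def
    proof (rule fu.klein)
      show "\<forall>b<n. 0 < s ! b / T" using fu.spos Tpos by simp
      show "(\<Sum>b<n. s ! b / T) = 1" using Tsum Tpos by (simp add: sum_divide_distrib[symmetric])
    qed
    thus ?thesis using lnT by simp
  qed
  have logi: "Cc \<le> Es" unfolding Cc_def Es_def by (rule fu.log_ineq)
  have Delta: "\<Delta> = (Cc - A) / \<beta>"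
  proof -
    have r1: "Re (mtr (\<Gamma> * H)) = (\<Sum>a<n. l ! a * p ! a)"
      unfolding Heq GG[symmetric] using fu.mtr_G_U[OF ll] by simp
    have r2: "Re (mtr (\<Phi> \<Gamma> * H)) = (\<Sum>a<n. l ! a * fu.c a)"
      unfolding Heq GG[symmetric] using fu.mtr_PhiG_U[OF ll] by simp
    have la: "\<And>a. a < n \<Longrightarrow> l ! a = - (ln (p ! a) + ln Z) / \<beta>"
    proof -
      fix a assume a: "a < n"
      have "ln (p ! a) = - \<beta> * l ! a - ln Z" unfolding pnth[OF a] using Zpos by (simp add: ln_div)
      thus "l ! a = - (ln (p ! a) + ln Z) / \<beta>" using bpos by (simp add: field_simps)
    qed
    have "\<Delta> = (\<Sum>a<n. l ! a * p ! a - l ! a * fu.c a)" unfolding assms(7) r1 r2 by (simp add: sum_subtractf)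
    also have "\<dots> = (\<Sum>a<n. (fu.c a * ln (p ! a) - p ! a * ln (p ! a) + ln Z * (fu.c a - p ! a)) / \<beta>)"
    proof (intro sum.cong refl)
      fix a assume "a \<in> {..<n}"
      hence a: "a < n" by simp
      show "l ! a * p ! a - l ! a * fu.c a = (fu.c a * ln (p ! a) - p ! a * ln (p ! a) + ln Z * (fu.c a - p ! a)) / \<beta>"
        unfolding la[OF a] using bpos by (simp add: field_simps)
    qed
    also have "\<dots> = (Cc - A + ln Z * ((\<Sum>a<n. fu.c a) - (\<Sum>a<n. p ! a))) / \<beta>"
      unfolding Cc_def A_def by (simp add: sum_divide_distrib[symmetric] sum.distrib sum_subtractf sum_distrib_left right_diff_distrib)
    also have "\<dots> = (Cc - A) / \<beta>" unfolding fu.sum_c psum' by simp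
    finally show ?thesis .
  qed
  have ReT: "Re (mtr (\<Phi>d \<Gamma>)) = T" unfolding mtrs by simp
  have i1: "\<Delta> \<le> - (1 / \<beta> * (A - Es))"
  proof -
    have "(Cc - A) / \<beta> \<le> (Es - A) / \<beta>" using logi bpos by (intro divide_right_mono) auto
    moreover have "(Es - A) / \<beta> = - (1 / \<beta> * (A - Es))" by (metis minus_diff_eq minus_divide_left mult_1 times_divide_eq_left)
    ultimately show ?thesis unfolding Delta by simp
  qed
  have i3: "1 / \<beta> * (ln T - (A - (Es - ln T))) \<le> 1 / \<beta> * ln T"
    using klein bpos by (intro mult_left_mono) auto
  have m: "- ((A - Es) / \<beta>) = (Es - A) / \<beta>" by (metis minus_diff_eq minus_divide_left)
  show ?thesis unfolding D1 D2 lnT ReT using i1 i3 m by (simp add: algebra_simps)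
qed

end
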